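(* Over all 3-periodics of $\mathcal{E}$, the incenter $X_1^\dagger$ of the focus-inversive triangle moves on the circle with center and radius \[C_1^\dagger=\left(c\left(-1+\rho^2\frac{-2a^2+b^2+2\delta}{2b^4}\right),0\right),\qquad R_1^\dagger=\rho^2\,\frac{-2\delta^2+b^4+(2a^2-b^2)\delta}{2ab^4}.\]
   Context: Let $a>b>0$ and let $\mathcal{E}$ be the ellipse $x^2/a^2+y^2/b^2=1$. Set $c=\sqrt{a^2-b^2}$, $\delta=\sqrt{a^4-a^2b^2+b^4}$, and let the foci be $f_1=(-c,0)$, $f_2=(c,0)$. A 3-periodic is a triangle $P_1P_2P_3$ with vertices on $\mathcal{E}$ such that at each vertex the normal to $\mathcal{E}$ bisects the angle formed by the two sides meeting at that vertex; these form a one-parameter family (one through every point of $\mathcal{E}$). Fix $\rho>0$; the focus-inversive triangle has vertices $P_i^\dagger=f_1+(\rho/d_{1,i})^2(P_i-f_1)$, $d_{1,i}=|P_i-f_1|$. *)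

theory Defs
  imports "HOL-Analysis.Analysis"
begin

definition on_ellipse :: "real \<Rightarrow> real \<Rightarrow> complex \<Rightarrow> bool" where
  "on_ellipse a b P \<longleftrightarrow> (Re P)\<^sup>2 / a\<^sup>2 + (Im P)\<^sup>2 / b\<^sup>2 = 1"

definition ell_normal :: "real \<Rightarrow> real \<Rightarrow> complex \<Rightarrow> complex" where
  "ell_normal a b P = Complex (Re P / a\<^sup>2) (Im P / b\<^sup>2)"

definition cross2 :: "complex \<Rightarrow> complex \<Rightarrow> real" where
  "cross2 z w = Re z * Im w - Im z * Re w"

text \<open>At vertex P with neighbours Q and R, the normal line to the ellipse bisects
  the angle QPR: the internal bisector direction (sum of unit vectors from P towards
  Q and towards R) is parallel to the normal.\<close>
definition normal_bisects :: "real \<Rightarrow> real \<Rightarrow> complex \<Rightarrow> complex \<Rightarrow> complex \<Rightarrow> bool" where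
  "normal_bisects a b P Q R \<longleftrightarrow>
     cross2 (ell_normal a b P)
       ((Q - P) / of_real (norm (Q - P)) + (R - P) / of_real (norm (R - P))) = 0"

definition three_periodic :: "real \<Rightarrow> real \<Rightarrow> complex \<Rightarrow> complex \<Rightarrow> complex \<Rightarrow> bool" where
  "three_periodic a b P1 P2 P3 \<longleftrightarrow>
     P1 \<noteq> P2 \<and> P2 \<noteq> P3 \<and> P1 \<noteq> P3 \<and>
     on_ellipse a b P1 \<and> on_ellipse a b P2 \<and> on_ellipse a b P3 \<and>
     normal_bisects a b P1 P3 P2 \<and> normal_bisects a b P2 P1 P3 \<and>
     normal_bisects a b P3 P2 P1"

definition inversion :: "real \<Rightarrow> complex \<Rightarrow> complex \<Rightarrow> complex" where
  "inversion \<rho> f P = f + of_real ((\<rho> / norm (P - f))\<^sup>2) * (P - f)"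

definition incenter :: "complex \<Rightarrow> complex \<Rightarrow> complex \<Rightarrow> complex" where
  "incenter A B C =
     (of_real (norm (B - C)) * A + of_real (norm (C - A)) * B + of_real (norm (A - B)) * C)
     / of_real (norm (B - C) + norm (C - A) + norm (A - B))"

end

theory Submission
  imports Defs
begin

definition eE :: "real \<Rightarrow> real \<Rightarrow> real \<Rightarrow> real" where
  "eE a c t = a*(1+t^2)+2*c*t"
definition AA :: "real \<Rightarrow> real \<Rightarrow> real \<Rightarrow> real \<Rightarrow> real" where
  "AA a c K t1 = K*(a^2*t1^2+(a^2-c^2))-1"
definition BB :: "real \<Rightarrow> real \<Rightarrow> real \<Rightarrow> real \<Rightarrow> real" where
  "BB a c K t1 = 2*t1*(1-K*c^2)"
definition CC :: "real \<Rightarrow> real \<Rightarrow> real \<Rightarrow> real \<Rightarrow> real" where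
  "CC a c K t1 = K*(a^2+(a^2-c^2)*t1^2)-t1^2"
definition NX3 :: "real \<Rightarrow> real \<Rightarrow> real \<Rightarrow> real \<Rightarrow> real \<Rightarrow> real" where
  "NX3 a c t1 t2 t3 = (t2-t3)^2*(1+t1^2)*eE a c t2*eE a c t3*(2*a*t1+c*(1+t1^2))
     + (t1-t3)^2*(1+t2^2)*eE a c t1*eE a c t3*(2*a*t2+c*(1+t2^2))
     + (t1-t2)^2*(1+t3^2)*eE a c t1*eE a c t2*(2*a*t3+c*(1+t3^2))"
definition NY3 :: "real \<Rightarrow> real \<Rightarrow> real \<Rightarrow> real \<Rightarrow> real \<Rightarrow> real" where
  "NY3 a c t1 t2 t3 = (t2-t3)^2*(1+t1^2)*eE a c t2*eE a c t3*(1-t1^2)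
     + (t1-t3)^2*(1+t2^2)*eE a c t1*eE a c t3*(1-t2^2)
     + (t1-t2)^2*(1+t3^2)*eE a c t1*eE a c t2*(1-t3^2)"
definition DN3 :: "real \<Rightarrow> real \<Rightarrow> real \<Rightarrow> real \<Rightarrow> real \<Rightarrow> real" where
  "DN3 a c t1 t2 t3 = (t2-t3)^2*eE a c t1 + (t1-t3)^2*eE a c t2 + (t1-t2)^2*eE a c t3"
definition EE3 :: "real \<Rightarrow> real \<Rightarrow> real \<Rightarrow> real \<Rightarrow> real \<Rightarrow> real" where
  "EE3 a c t1 t2 t3 = eE a c t1 * eE a c t2 * eE a c t3"

definition NXsp :: "real \<Rightarrow> real \<Rightarrow> real \<Rightarrow> real \<Rightarrow> real \<Rightarrow> real" where
  "NXsp a c t1 zs zp = (2*t1^4*zs^4*a^2*c + 4*t1^4*zs^3*zp*a*c^2 + 2*t1^4*zs^3*a^3 + 2*t1^4*zs^3*a*c^2 + 2*t1^4*zs^2*zp^2*a^2*c - 6*t1^4*zs^2*zp*a^2*c + 4*t1^4*zs^2*zp*c^3 + 4*t1^4*zs^2*a^2*c + 2*t1^4*zs*zp^2*a^3 - 14*t1^4*zs*zp^2*a*c^2 - 4*t1^4*zs*zp*a^3 - 4*t1^4*zs*zp*a*c^2 + 2*t1^4*zs*a^3 + 2*t1^4*zs*a*c^2 - 6*t1^4*zp^3*a^2*c + 6*t1^4*zp^2*a^2*c - 16*t1^4*zp^2*c^3 - 2*t1^4*zp*a^2*c + 2*t1^4*a^2*c + 2*t1^3*zs^4*a^3 + 2*t1^3*zs^4*a*c^2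 + 2*t1^3*zs^3*zp*a^2*c + 4*t1^3*zs^3*zp*c^3 + 6*t1^3*zs^3*a^2*c + 2*t1^3*zs^2*zp^2*a^3 - 2*t1^3*zs^2*zp^2*a*c^2 - 20*t1^3*zs^2*zp*a^3 + 8*t1^3*zs^2*zp*a*c^2 + 2*t1^3*zs^2*a^3 + 2*t1^3*zs^2*a*c^2 - 2*t1^3*zs*zp^3*a^2*c - 18*t1^3*zs*zp^2*a^2*c - 12*t1^3*zs*zp^2*c^3 - 30*t1^3*zs*zp*a^2*c + 8*t1^3*zs*zp*c^3 + 2*t1^3*zs*a^2*c + 4*t1^3*zs*c^3 - 16*t1^3*zp^3*a^3 + 4*t1^3*zp^3*a*c^2 + 32*t1^3*zp^2*a^3 - 52*t1^3*zp^2*a*c^2 - 16*t1^3*zp*a^3 + 12*t1^3*zp*a*c^2 + 4*t1^3*a*c^2 + 4*t1^2*zs^4*a^2*c + 2*t1^2*zs^3*zp*a^3 + 2*t1^2*zs^3*zp*a*c^2 + 2*t1^2*zs^3*a^3 + 2*t1^2*zs^3*a*c^2 + 6*t1^2*zs^2*zp^2*a^2*c - 8*t1^2*zs^2*zp^2*c^3 - 28*t1^2*zs^2*zp*a^2*c + 8*t1^2*zs^2*zp*c^3 + 6*t1^2*zs^2*a^2*c - 8*t1^2*zs^2*c^3 + 2*t1^2*zs*zp^3*a^3 - 2*t1^2*zs*zp^3*a*c^2 - 2*t1^2*zs*zp^2*a^3 - 30*t1^2*zs*zp^2*a*c^2 - 2*t1^2*zs*zp*a^3 - 30*t1^2*zs*zp*a*c^2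 + 2*t1^2*zs*a^3 - 2*t1^2*zs*a*c^2 + 2*t1^2*zp^4*a^2*c - 24*t1^2*zp^3*a^2*c + 16*t1^2*zp^3*c^3 + 44*t1^2*zp^2*a^2*c - 64*t1^2*zp^2*c^3 - 24*t1^2*zp*a^2*c + 16*t1^2*zp*c^3 + 2*t1^2*a^2*c + 2*t1*zs^4*a^3 + 2*t1*zs^4*a*c^2 + 6*t1*zs^3*zp*a^2*c + 2*t1*zs^3*a^2*c + 4*t1*zs^3*c^3 + 2*t1*zs^2*zp^2*a^3 + 2*t1*zs^2*zp^2*a*c^2 - 20*t1*zs^2*zp*a^3 + 8*t1*zs^2*zp*a*c^2 + 2*t1*zs^2*a^3 - 2*t1*zs^2*a*c^2 + 2*t1*zs*zp^3*a^2*c + 4*t1*zs*zp^3*c^3 - 30*t1*zs*zp^2*a^2*c + 8*t1*zs*zp^2*c^3 - 18*t1*zs*zp*a^2*c - 12*t1*zs*zp*c^3 - 2*t1*zs*a^2*c + 4*t1*zp^4*a*c^2 - 16*t1*zp^3*a^3 + 12*t1*zp^3*a*c^2 + 32*t1*zp^2*a^3 - 52*t1*zp^2*a*c^2 - 16*t1*zp*a^3 + 4*t1*zp*a*c^2 + 2*zs^4*a^2*c + 2*zs^3*zp*a^3 + 2*zs^3*zp*a*c^2 + 4*zs^3*a*c^2 + 4*zs^2*zp^2*a^2*c - 6*zs^2*zp*a^2*c + 4*zs^2*zp*c^3 + 2*zs^2*a^2*c + 2*zs*zp^3*a^3 + 2*zs*zp^3*a*c^2 - 4*zs*zp^2*a^3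 - 4*zs*zp^2*a*c^2 + 2*zs*zp*a^3 - 14*zs*zp*a*c^2 + 2*zp^4*a^2*c - 2*zp^3*a^2*c + 6*zp^2*a^2*c - 16*zp^2*c^3 - 6*zp*a^2*c)"
definition NXhom :: "real \<Rightarrow> real \<Rightarrow> real \<Rightarrow> real \<Rightarrow> real \<Rightarrow> real \<Rightarrow> real \<Rightarrow> real" where
  "NXhom a c K t1 zs zp A = (2*t1^4*a^2*c + 4*t1^3*a*c^2 + 2*t1^2*a^2*c)*A^4 + (-2*t1^4*a^2*c - 16*t1^3*a^3 + 12*t1^3*a*c^2 - 24*t1^2*a^2*c + 16*t1^2*c^3 - 16*t1*a^3 + 4*t1*a*c^2 - 6*a^2*c)*zp^1*A^3 + (6*t1^4*a^2*c - 16*t1^4*c^3 + 32*t1^3*a^3 - 52*t1^3*a*c^2 + 44*t1^2*a^2*c - 64*t1^2*c^3 + 32*t1*a^3 - 52*t1*a*c^2 + 6*a^2*c - 16*c^3)*zp^2*A^2 + (-6*t1^4*a^2*c - 16*t1^3*a^3 + 4*t1^3*a*c^2 - 24*t1^2*a^2*c + 16*t1^2*c^3 - 16*t1*a^3 + 12*t1*a*c^2 - 2*a^2*c)*zp^3*A^1 + (2*t1^2*a^2*c + 4*t1*a*c^2 + 2*a^2*c)*zp^4 + (2*t1^4*a^3 + 2*t1^4*a*c^2 + 2*t1^3*a^2*c + 4*t1^3*c^3 + 2*t1^2*a^3 - 2*t1^2*a*c^2 - 2*t1*a^2*c)*zs^1*A^3 + (-4*t1^4*a^3 - 4*t1^4*a*c^2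 - 30*t1^3*a^2*c + 8*t1^3*c^3 - 2*t1^2*a^3 - 30*t1^2*a*c^2 - 18*t1*a^2*c - 12*t1*c^3 + 2*a^3 - 14*a*c^2)*zs^1*zp^1*A^2 + (2*t1^4*a^3 - 14*t1^4*a*c^2 - 18*t1^3*a^2*c - 12*t1^3*c^3 - 2*t1^2*a^3 - 30*t1^2*a*c^2 - 30*t1*a^2*c + 8*t1*c^3 - 4*a^3 - 4*a*c^2)*zs^1*zp^2*A^1 + (-2*t1^3*a^2*c + 2*t1^2*a^3 - 2*t1^2*a*c^2 + 2*t1*a^2*c + 4*t1*c^3 + 2*a^3 + 2*a*c^2)*zs^1*zp^3 + (4*t1^4*a^2*c + 2*t1^3*a^3 + 2*t1^3*a*c^2 + 6*t1^2*a^2*c - 8*t1^2*c^3 + 2*t1*a^3 - 2*t1*a*c^2 + 2*a^2*c)*zs^2*A^2 + (-6*t1^4*a^2*c + 4*t1^4*c^3 - 20*t1^3*a^3 + 8*t1^3*a*c^2 - 28*t1^2*a^2*c + 8*t1^2*c^3 - 20*t1*a^3 + 8*t1*a*c^2 - 6*a^2*c + 4*c^3)*zs^2*zp^1*A^1 + (2*t1^4*a^2*c + 2*t1^3*a^3 - 2*t1^3*a*c^2 + 6*t1^2*a^2*c - 8*t1^2*c^3 + 2*t1*a^3 + 2*t1*a*c^2 + 4*a^2*c)*zs^2*zp^2 + (2*t1^4*a^3 + 2*t1^4*a*c^2 + 6*t1^3*a^2*c + 2*t1^2*a^3 + 2*t1^2*a*c^2 + 2*t1*a^2*c + 4*t1*c^3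 + 4*a*c^2)*zs^3*A^1 + (4*t1^4*a*c^2 + 2*t1^3*a^2*c + 4*t1^3*c^3 + 2*t1^2*a^3 + 2*t1^2*a*c^2 + 6*t1*a^2*c + 2*a^3 + 2*a*c^2)*zs^3*zp^1 + (2*t1^4*a^2*c + 2*t1^3*a^3 + 2*t1^3*a*c^2 + 4*t1^2*a^2*c + 2*t1*a^3 + 2*t1*a*c^2 + 2*a^2*c)*zs^4"
definition NX2 :: "real \<Rightarrow> real \<Rightarrow> real \<Rightarrow> real \<Rightarrow> real" where
  "NX2 a c K t1 = (-8*t1^8*K^4*a^6*c^3 + 20*t1^8*K^4*a^4*c^5 - 10*t1^8*K^4*a^2*c^7 + 8*t1^8*K^3*a^6*c + 8*t1^8*K^3*a^4*c^3 - 14*t1^8*K^3*a^2*c^5 - 12*t1^8*K^2*a^4*c + 2*t1^8*K^2*a^2*c^3 + 6*t1^8*K*a^2*c - 32*t1^7*K^4*a^7*c^2 + 64*t1^7*K^4*a^5*c^4 - 36*t1^7*K^4*a^3*c^6 + 8*t1^7*K^4*a*c^8 + 48*t1^7*K^3*a^5*c^2 - 60*t1^7*K^3*a^3*c^4 + 16*t1^7*K^3*a*c^6 - 16*t1^7*K^2*a^5 - 12*t1^7*K^2*a^3*c^2 + 8*t1^7*K^2*a*c^4 + 12*t1^7*K*a^3 - 32*t1^6*K^4*a^6*c^3 + 32*t1^6*K^4*a^4*c^5 + 8*t1^6*K^4*a^2*c^7 - 8*t1^6*K^4*c^9 + 96*t1^6*K^3*a^6*c - 128*t1^6*K^3*a^4*c^3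 + 8*t1^6*K^3*a^2*c^5 + 24*t1^6*K^3*c^7 - 96*t1^6*K^2*a^4*c + 88*t1^6*K^2*a^2*c^3 + 8*t1^6*K^2*c^5 + 24*t1^6*K*a^2*c - 24*t1^6*K*c^3 - 96*t1^5*K^4*a^7*c^2 + 192*t1^5*K^4*a^5*c^4 - 140*t1^5*K^4*a^3*c^6 + 40*t1^5*K^4*a*c^8 + 144*t1^5*K^3*a^5*c^2 - 180*t1^5*K^3*a^3*c^4 + 32*t1^5*K^3*a*c^6 - 48*t1^5*K^2*a^5 - 4*t1^5*K^2*a^3*c^2 + 72*t1^5*K^2*a*c^4 + 36*t1^5*K*a^3 - 48*t1^5*K*a*c^2 - 48*t1^4*K^4*a^6*c^3 + 24*t1^4*K^4*a^4*c^5 + 36*t1^4*K^4*a^2*c^7 - 16*t1^4*K^4*c^9 + 176*t1^4*K^3*a^6*c - 272*t1^4*K^3*a^4*c^3 + 172*t1^4*K^3*a^2*c^5 - 80*t1^4*K^3*c^7 - 168*t1^4*K^2*a^4*c + 300*t1^4*K^2*a^2*c^3 - 112*t1^4*K^2*c^5 + 36*t1^4*K*a^2*c - 48*t1^4*K*c^3 - 96*t1^3*K^4*a^7*c^2 + 192*t1^3*K^4*a^5*c^4 - 140*t1^3*K^4*a^3*c^6 + 40*t1^3*K^4*a*c^8 + 144*t1^3*K^3*a^5*c^2 - 180*t1^3*K^3*a^3*c^4 + 32*t1^3*K^3*a*c^6 - 48*t1^3*K^2*a^5 - 4*t1^3*K^2*a^3*c^2 + 72*t1^3*K^2*a*c^4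 + 36*t1^3*K*a^3 - 48*t1^3*K*a*c^2 - 32*t1^2*K^4*a^6*c^3 + 32*t1^2*K^4*a^4*c^5 + 8*t1^2*K^4*a^2*c^7 - 8*t1^2*K^4*c^9 + 96*t1^2*K^3*a^6*c - 128*t1^2*K^3*a^4*c^3 + 8*t1^2*K^3*a^2*c^5 + 24*t1^2*K^3*c^7 - 96*t1^2*K^2*a^4*c + 88*t1^2*K^2*a^2*c^3 + 8*t1^2*K^2*c^5 + 24*t1^2*K*a^2*c - 24*t1^2*K*c^3 - 32*t1*K^4*a^7*c^2 + 64*t1*K^4*a^5*c^4 - 36*t1*K^4*a^3*c^6 + 8*t1*K^4*a*c^8 + 48*t1*K^3*a^5*c^2 - 60*t1*K^3*a^3*c^4 + 16*t1*K^3*a*c^6 - 16*t1*K^2*a^5 - 12*t1*K^2*a^3*c^2 + 8*t1*K^2*a*c^4 + 12*t1*K*a^3 - 8*K^4*a^6*c^3 + 20*K^4*a^4*c^5 - 10*K^4*a^2*c^7 + 8*K^3*a^6*c + 8*K^3*a^4*c^3 - 14*K^3*a^2*c^5 - 12*K^2*a^4*c + 2*K^2*a^2*c^3 + 6*K*a^2*c)"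
lemma NX_sp: "NX3 a c t1 t2 t3 = NXsp a c t1 (t2+t3) (t2*t3)"
  unfolding NX3_def NXsp_def eE_def EE3_def by algebra
lemma NX_hom: "A^4 * NXsp a c t1 zs zp = NXhom a c K t1 (A*zs) (A*zp) A"
  unfolding NXsp_def NXhom_def by algebra
lemma NX_q: "NXhom a c K t1 (-BB a c K t1) (CC a c K t1) (AA a c K t1) = (eE a c t1)^2 * NX2 a c K t1"
  unfolding NXhom_def NX2_def AA_def BB_def CC_def eE_def by algebra

definition NYsp :: "real \<Rightarrow> real \<Rightarrow> real \<Rightarrow> real \<Rightarrow> real \<Rightarrow> real" where
  "NYsp a c t1 zs zp = (-2*t1^4*zs^4*a^2 - 4*t1^4*zs^3*zp*a*c - 2*t1^4*zs^3*a*c - 2*t1^4*zs^2*zp^2*a^2 + 10*t1^4*zs^2*zp*a^2 - 4*t1^4*zs^2*zp*c^2 + 14*t1^4*zs*zp^2*a*c + 8*t1^4*zs*zp*a*c + 2*t1^4*zs*a*c + 6*t1^4*zp^3*a^2 - 10*t1^4*zp^2*a^2 + 16*t1^4*zp^2*c^2 + 2*t1^4*zp*a^2 + 2*t1^4*a^2 - 2*t1^3*zs^4*a*c + 2*t1^3*zs^3*zp*a^2 - 4*t1^3*zs^3*zp*c^2 - 2*t1^3*zs^3*a^2 + 2*t1^3*zs^2*zp^2*a*c + 8*t1^3*zs^2*zp*a*c - 2*t1^3*zs^2*a*c + 2*t1^3*zs*zp^3*a^2 - 6*t1^3*zs*zp^2*a^2 + 12*t1^3*zs*zp^2*c^2 +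 6*t1^3*zs*zp*a^2 - 2*t1^3*zs*a^2 + 4*t1^3*zs*c^2 - 4*t1^3*zp^3*a*c - 4*t1^3*zp^2*a*c + 4*t1^3*zp*a*c + 4*t1^3*a*c + 2*t1^2*zs^3*zp*a*c - 2*t1^2*zs^3*a*c - 2*t1^2*zs^2*zp^2*a^2 + 8*t1^2*zs^2*zp^2*c^2 + 2*t1^2*zs^2*a^2 - 8*t1^2*zs^2*c^2 + 2*t1^2*zs*zp^3*a*c - 6*t1^2*zs*zp^2*a*c + 6*t1^2*zs*zp*a*c - 2*t1^2*zs*a*c - 2*t1^2*zp^4*a^2 + 4*t1^2*zp^3*a^2 - 16*t1^2*zp^3*c^2 - 4*t1^2*zp*a^2 + 16*t1^2*zp*c^2 + 2*t1^2*a^2 + 2*t1*zs^4*a*c + 2*t1*zs^3*zp*a^2 - 2*t1*zs^3*a^2 + 4*t1*zs^3*c^2 + 2*t1*zs^2*zp^2*a*c - 8*t1*zs^2*zp*a*c - 2*t1*zs^2*a*c + 2*t1*zs*zp^3*a^2 - 4*t1*zs*zp^3*c^2 - 6*t1*zs*zp^2*a^2 + 6*t1*zs*zp*a^2 - 12*t1*zs*zp*c^2 - 2*t1*zs*a^2 - 4*t1*zp^4*a*c - 4*t1*zp^3*a*c + 4*t1*zp^2*a*c + 4*t1*zp*a*c + 2*zs^4*a^2 + 2*zs^3*zp*a*c + 4*zs^3*a*c - 10*zs^2*zp*a^2 + 4*zs^2*zp*c^2 + 2*zs^2*a^2 - 2*zs*zp^3*a*c - 8*zs*zp^2*a*c -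 14*zs*zp*a*c - 2*zp^4*a^2 - 2*zp^3*a^2 + 10*zp^2*a^2 - 16*zp^2*c^2 - 6*zp*a^2)"
definition NYhom :: "real \<Rightarrow> real \<Rightarrow> real \<Rightarrow> real \<Rightarrow> real \<Rightarrow> real \<Rightarrow> real \<Rightarrow> real" where
  "NYhom a c K t1 zs zp A = (2*t1^4*a^2 + 4*t1^3*a*c + 2*t1^2*a^2)*A^4 + (2*t1^4*a^2 + 4*t1^3*a*c - 4*t1^2*a^2 + 16*t1^2*c^2 + 4*t1*a*c - 6*a^2)*zp^1*A^3 + (-10*t1^4*a^2 + 16*t1^4*c^2 - 4*t1^3*a*c + 4*t1*a*c + 10*a^2 - 16*c^2)*zp^2*A^2 + (6*t1^4*a^2 - 4*t1^3*a*c + 4*t1^2*a^2 - 16*t1^2*c^2 - 4*t1*a*c - 2*a^2)*zp^3*A^1 + (-2*t1^2*a^2 - 4*t1*a*c - 2*a^2)*zp^4 + (2*t1^4*a*c - 2*t1^3*a^2 + 4*t1^3*c^2 - 2*t1^2*a*c - 2*t1*a^2)*zs^1*A^3 + (8*t1^4*a*c + 6*t1^3*a^2 + 6*t1^2*a*c + 6*t1*a^2 - 12*t1*c^2 - 14*a*c)*zs^1*zp^1*A^2 + (14*t1^4*a*c - 6*t1^3*a^2 + 12*t1^3*c^2 - 6*t1^2*a*c - 6*t1*a^2 - 8*a*c)*zs^1*zp^2*A^1 + (2*t1^3*a^2 + 2*t1^2*a*c + 2*t1*a^2 - 4*t1*c^2 - 2*a*c)*zs^1*zp^3 + (-2*t1^3*a*c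 + 2*t1^2*a^2 - 8*t1^2*c^2 - 2*t1*a*c + 2*a^2)*zs^2*A^2 + (10*t1^4*a^2 - 4*t1^4*c^2 + 8*t1^3*a*c - 8*t1*a*c - 10*a^2 + 4*c^2)*zs^2*zp^1*A^1 + (-2*t1^4*a^2 + 2*t1^3*a*c - 2*t1^2*a^2 + 8*t1^2*c^2 + 2*t1*a*c)*zs^2*zp^2 + (-2*t1^4*a*c - 2*t1^3*a^2 - 2*t1^2*a*c - 2*t1*a^2 + 4*t1*c^2 + 4*a*c)*zs^3*A^1 + (-4*t1^4*a*c + 2*t1^3*a^2 - 4*t1^3*c^2 + 2*t1^2*a*c + 2*t1*a^2 + 2*a*c)*zs^3*zp^1 + (-2*t1^4*a^2 - 2*t1^3*a*c + 2*t1*a*c + 2*a^2)*zs^4"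
definition NY2 :: "real \<Rightarrow> real \<Rightarrow> real \<Rightarrow> real \<Rightarrow> real" where
  "NY2 a c K t1 = (16*t1^8*K^4*a^6*c^2 - 24*t1^8*K^4*a^4*c^4 + 10*t1^8*K^4*a^2*c^6 - 16*t1^8*K^3*a^4*c^2 + 14*t1^8*K^3*a^2*c^4 + 8*t1^8*K^2*a^4 - 2*t1^8*K^2*a^2*c^2 - 6*t1^8*K*a^2 + 8*t1^7*K^4*a^3*c^5 - 8*t1^7*K^4*a*c^7 - 32*t1^7*K^3*a^5*c + 32*t1^7*K^3*a^3*c^3 - 16*t1^7*K^3*a*c^5 + 24*t1^7*K^2*a^3*c - 8*t1^7*K^2*a*c^3 + 32*t1^6*K^4*a^6*c^2 - 48*t1^6*K^4*a^4*c^4 + 4*t1^6*K^4*a^2*c^6 + 8*t1^6*K^4*c^8 - 32*t1^6*K^3*a^4*c^2 + 60*t1^6*K^3*a^2*c^4 - 24*t1^6*K^3*c^6 + 16*t1^6*K^2*a^4 - 20*t1^6*K^2*a^2*c^2 - 8*t1^6*K^2*c^4 - 12*t1^6*K*a^2 + 24*t1^6*K*c^2 + 8*t1^5*K^4*a^3*c^5 - 8*t1^5*K^4*a*c^7 - 32*t1^5*K^3*a^5*c + 32*t1^5*K^3*a^3*c^3 + 48*t1^5*K^3*a*c^5 + 24*t1^5*K^2*a^3*c - 72*t1^5*K^2*a*c^3 - 8*t1^3*K^4*a^3*c^5 + 8*t1^3*K^4*a*c^7 + 32*t1^3*K^3*a^5*c - 32*t1^3*K^3*a^3*c^3 - 48*t1^3*K^3*a*c^5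 - 24*t1^3*K^2*a^3*c + 72*t1^3*K^2*a*c^3 - 32*t1^2*K^4*a^6*c^2 + 48*t1^2*K^4*a^4*c^4 - 4*t1^2*K^4*a^2*c^6 - 8*t1^2*K^4*c^8 + 32*t1^2*K^3*a^4*c^2 - 60*t1^2*K^3*a^2*c^4 + 24*t1^2*K^3*c^6 - 16*t1^2*K^2*a^4 + 20*t1^2*K^2*a^2*c^2 + 8*t1^2*K^2*c^4 + 12*t1^2*K*a^2 - 24*t1^2*K*c^2 - 8*t1*K^4*a^3*c^5 + 8*t1*K^4*a*c^7 + 32*t1*K^3*a^5*c - 32*t1*K^3*a^3*c^3 + 16*t1*K^3*a*c^5 - 24*t1*K^2*a^3*c + 8*t1*K^2*a*c^3 - 16*K^4*a^6*c^2 + 24*K^4*a^4*c^4 - 10*K^4*a^2*c^6 + 16*K^3*a^4*c^2 - 14*K^3*a^2*c^4 - 8*K^2*a^4 + 2*K^2*a^2*c^2 + 6*K*a^2)"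
lemma NY_sp: "NY3 a c t1 t2 t3 = NYsp a c t1 (t2+t3) (t2*t3)"
  unfolding NY3_def NYsp_def eE_def EE3_def by algebra
lemma NY_hom: "A^4 * NYsp a c t1 zs zp = NYhom a c K t1 (A*zs) (A*zp) A"
  unfolding NYsp_def NYhom_def by algebra
lemma NY_q: "NYhom a c K t1 (-BB a c K t1) (CC a c K t1) (AA a c K t1) = (eE a c t1)^2 * NY2 a c K t1"
  unfolding NYhom_def NY2_def AA_def BB_def CC_def eE_def by algebra

definition DNsp :: "real \<Rightarrow> real \<Rightarrow> real \<Rightarrow> real \<Rightarrow> real \<Rightarrow> real" where
  "DNsp a c t1 zs zp = (2*t1^2*zs^2*a + 2*t1^2*zs*c - 6*t1^2*zp*a + 2*t1^2*a + 2*t1*zs^2*c - 2*t1*zs*zp*a - 2*t1*zs*a - 16*t1*zp*c + 2*zs^2*a + 2*zs*zp*c + 2*zp^2*a - 6*zp*a)"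
definition DNhom :: "real \<Rightarrow> real \<Rightarrow> real \<Rightarrow> real \<Rightarrow> real \<Rightarrow> real \<Rightarrow> real \<Rightarrow> real" where
  "DNhom a c K t1 zs zp A = (2*t1^2*a)*A^2 + (-6*t1^2*a - 16*t1*c - 6*a)*zp^1*A^1 + (2*a)*zp^2 + (2*t1^2*c - 2*t1*a)*zs^1*A^1 + (-2*t1*a + 2*c)*zs^1*zp^1 + (2*t1^2*a + 2*t1*c + 2*a)*zs^2"
definition DN2 :: "real \<Rightarrow> real \<Rightarrow> real \<Rightarrow> real \<Rightarrow> real" where
  "DN2 a c K t1 = (-4*t1^2*K^2*a^3 + 6*t1^2*K^2*a*c^2 + 6*t1^2*K*a - 4*t1*K^2*c^3 - 12*t1*K*c - 4*K^2*a^3 + 6*K^2*a*c^2 + 6*K*a)"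
lemma DN_sp: "DN3 a c t1 t2 t3 = DNsp a c t1 (t2+t3) (t2*t3)"
  unfolding DN3_def DNsp_def eE_def EE3_def by algebra
lemma DN_hom: "A^2 * DNsp a c t1 zs zp = DNhom a c K t1 (A*zs) (A*zp) A"
  unfolding DNsp_def DNhom_def by algebra
lemma DN_q: "DNhom a c K t1 (-BB a c K t1) (CC a c K t1) (AA a c K t1) = (eE a c t1)^2 * DN2 a c K t1"
  unfolding DNhom_def DN2_def AA_def BB_def CC_def eE_def by algebra

definition EEsp :: "real \<Rightarrow> real \<Rightarrow> real \<Rightarrow> real \<Rightarrow> real \<Rightarrow> real" where
  "EEsp a c t1 zs zp = (t1^2*zs^2*a^3 + 2*t1^2*zs*zp*a^2*c + 2*t1^2*zs*a^2*c + t1^2*zp^2*a^3 - 2*t1^2*zp*a^3 + 4*t1^2*zp*a*c^2 + t1^2*a^3 + 2*t1*zs^2*a^2*c + 4*t1*zs*zp*a*c^2 + 4*t1*zs*a*c^2 + 2*t1*zp^2*a^2*c - 4*t1*zp*a^2*c + 8*t1*zp*c^3 + 2*t1*a^2*c + zs^2*a^3 + 2*zs*zp*a^2*c + 2*zs*a^2*c + zp^2*a^3 - 2*zp*a^3 + 4*zp*a*c^2 + a^3)"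
definition EEhom :: "real \<Rightarrow> real \<Rightarrow> real \<Rightarrow> real \<Rightarrow> real \<Rightarrow> real \<Rightarrow> real \<Rightarrow> real" where
  "EEhom a c K t1 zs zp A = (t1^2*a^3 + 2*t1*a^2*c + a^3)*A^2 + (-2*t1^2*a^3 + 4*t1^2*a*c^2 - 4*t1*a^2*c + 8*t1*c^3 - 2*a^3 + 4*a*c^2)*zp^1*A^1 + (t1^2*a^3 + 2*t1*a^2*c + a^3)*zp^2 + (2*t1^2*a^2*c + 4*t1*a*c^2 + 2*a^2*c)*zs^1*A^1 + (2*t1^2*a^2*c + 4*t1*a*c^2 + 2*a^2*c)*zs^1*zp^1 + (t1^2*a^3 + 2*t1*a^2*c + a^3)*zs^2"
definition EE2 :: "real \<Rightarrow> real \<Rightarrow> real \<Rightarrow> real \<Rightarrow> real" where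
  "EE2 a c K t1 = (4*t1^2*K^2*a^3*c^2 - 3*t1^2*K^2*a*c^4 - 2*t1^2*K*a*c^2 + t1^2*a + 2*t1*K^2*c^5 - 8*t1*K*a^2*c + 4*t1*K*c^3 + 2*t1*c + 4*K^2*a^3*c^2 - 3*K^2*a*c^4 - 2*K*a*c^2 + a)"
lemma EE_sp: "EE3 a c t1 t2 t3 = EEsp a c t1 (t2+t3) (t2*t3)"
  unfolding EE3_def EEsp_def eE_def EE3_def by algebra
lemma EE_hom: "A^2 * EEsp a c t1 zs zp = EEhom a c K t1 (A*zs) (A*zp) A"
  unfolding EEsp_def EEhom_def by algebra
lemma EE_q: "EEhom a c K t1 (-BB a c K t1) (CC a c K t1) (AA a c K t1) = (eE a c t1)^2 * EE2 a c K t1"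
  unfolding EEhom_def EE2_def AA_def BB_def CC_def eE_def by algebra

lemma fin_lem:
  fixes X Y W a b2 c K0 r0 :: real
  assumes W: "W \<noteq> 0" and a: "a \<noteq> 0" and b: "b2 \<noteq> 0"
    and Z: "4*a^2*(2*b2^2*X - c*K0*W)^2 + 16*a^2*b2^5*Y^2 - r0^2*W^2 = 0"
  shows "(X/W - c*K0/(2*b2^2))^2 + b2*(Y/W)^2 = (r0/(4*a*b2^2))^2"
proof -
  have e: "X/W - c*K0/(2*b2^2) = (2*b2^2*X - c*K0*W)/(2*b2^2*W)" using W b by (simp add: field_simps)
  have "(16*a^2*b2^4*W^2) * ((X/W - c*K0/(2*b2^2))^2 + b2*(Y/W)^2)
      = 4*a^2*(2*b2^2*X - c*K0*W)^2 + 16*a^2*b2^5*Y^2"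
    unfolding e using W b by (simp add: power_divide field_simps) algebra
  also have "\<dots> = r0^2*W^2" using Z by simp
  also have "\<dots> = (16*a^2*b2^4*W^2) * (r0/(4*a*b2^2))^2" using a b by (simp add: power_divide field_simps)
  finally show ?thesis using W a b by simp
qed

lemma Zid:
  fixes a c K t :: real
  assumes q: "c^4*K^2 + 2*(2*a^2-c^2)*K - 3 = 0"
  shows "4*a^2*(2*(a^2-c^2)^2*NX2 a c K t - c*(c^4*K - a^2 + 2*(a^2-c^2))*((eE a c t)^2*DN2 a c K t*EE2 a c K t))^2
     + 16*a^2*(a^2-c^2)^5*(NY2 a c K t)^2
     - (-4*a^4+4*a^2*(a^2-c^2)-2*(a^2-c^2)^2+(2*a^2-(a^2-c^2))*(c^4*K+a^2+(a^2-c^2)))^2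
       *((eE a c t)^2*DN2 a c K t*EE2 a c K t)^2 = 0"
  using q unfolding NX2_def NY2_def DN2_def EE2_def eE_def by algebra

lemma E_quad:
  "AA a c K t1 * t2^2 + BB a c K t1 * t2 + CC a c K t1
     = K*(a^2*(1-t1*t2)^2+(a^2-c^2)*(t1+t2)^2) - (t1-t2)^2"
  unfolding AA_def BB_def CC_def by algebra

lemma eE_pos:
  fixes a c t :: real
  assumes "0 < c" "c < a"
  shows "eE a c t > 0"
proof -
  have "a*(1+t^2) + 2*c*t = (a-c)*(1+t^2) + c*(1+t)^2"
    by (simp add: algebra_simps power2_eq_square)
  moreover have "(a-c)*(1+t^2) > 0" using assms by (simp add: add_pos_nonneg)
  moreover have "c*(1+t)^2 \<ge> 0" using assms by simp
  ultimately show ?thesis unfolding eE_def by linarith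
qed

lemma core:
  fixes a c K t1 t2 t3 :: real
  assumes a: "0 < c" "c < a" and Kp: "K > 0"
    and E12: "K*(a^2*(1-t1*t2)^2+(a^2-c^2)*(t1+t2)^2) = (t1-t2)^2"
    and E13: "K*(a^2*(1-t1*t3)^2+(a^2-c^2)*(t1+t3)^2) = (t1-t3)^2"
    and E23: "K*(a^2*(1-t2*t3)^2+(a^2-c^2)*(t2+t3)^2) = (t2-t3)^2"
    and d: "t1 \<noteq> t2" "t1 \<noteq> t3" "t2 \<noteq> t3"
  shows "c^4*K^2 + 2*(2*a^2-c^2)*K - 3 = 0"
    and "(NX3 a c t1 t2 t3/(DN3 a c t1 t2 t3*EE3 a c t1 t2 t3) - c*(c^4*K - a^2 + 2*(a^2-c^2))/(2*(a^2-c^2)^2))^2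
         + (a^2-c^2)*(NY3 a c t1 t2 t3/(DN3 a c t1 t2 t3*EE3 a c t1 t2 t3))^2
         = ((-4*a^4+4*a^2*(a^2-c^2)-2*(a^2-c^2)^2+(2*a^2-(a^2-c^2))*(c^4*K+a^2+(a^2-c^2)))/(4*a*(a^2-c^2)^2))^2"
proof -
  define A where "A = AA a c K t1"
  define B where "B = BB a c K t1"
  define C where "C = CC a c K t1"
  have q2: "A*t2^2 + B*t2 + C = 0" using E12 E_quad[of a c K t1 t2] unfolding A_def B_def C_def by simp
  have q3: "A*t3^2 + B*t3 + C = 0" using E13 E_quad[of a c K t1 t3] unfolding A_def B_def C_def by simp
  have "(t2-t3)*(A*(t2+t3)+B) = 0" using q2 q3 by algebra
  hence vs: "A*(t2+t3) = -B" using d by simp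
  have vp: "A*(t2*t3) = C" using q2 vs by algebra
  have A0: "A \<noteq> 0"
  proof
    assume A0: "A = 0"
    hence B0: "B = 0" using vs by simp
    hence C0: "C = 0" using vp A0 by simp
    have b2: "a^2-c^2 > 0" using a by (simp add: power_strict_mono)
    from B0 have "t1 = 0 \<or> K*c^2 = 1" unfolding B_def BB_def by auto
    thus False
    proof
      assume "t1 = 0"
      with C0 have "K*a^2 = 0" unfolding C_def CC_def by simp
      thus False using Kp a by simp
    next
      assume kc: "K*c^2 = 1"
      have e1: "K*(a^2*t1^2+(a^2-c^2)) = K*c^2" using A0 kc unfolding A_def AA_def by simp
      have e2: "K*(a^2+(a^2-c^2)*t1^2) = K*c^2*t1^2" using C0 kc unfolding C_def CC_def by simp
      have "a^2*t1^2+(a^2-c^2) = c^2" using e1 Kp by simp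
      hence f1: "a^2*t1^2 = 2*c^2 - a^2" by simp
      have "a^2+(a^2-c^2)*t1^2 = c^2*t1^2" using e2 Kp by (simp add: mult.assoc)
      hence f2: "a^2 = (2*c^2-a^2)*t1^2" by (simp add: algebra_simps)
      have "a^2*a^2 = (2*c^2-a^2)*(2*c^2-a^2)" using f1 f2 by (metis mult.assoc mult.commute)
      hence "4*c^2*(c^2-a^2) = 0" by algebra
      thus False using a b2 by simp
    qed
  qed
  define b2 where "b2 = a^2 - c^2"
  have b2p: "b2 > 0" unfolding b2_def using a by (simp add: power_strict_mono)
  have "A^2*(K*(a^2*(1-t2*t3)^2+b2*(t2+t3)^2) - (t2-t3)^2)
      = K*(a^2*(A - A*(t2*t3))^2 + b2*(A*(t2+t3))^2) - ((A*(t2+t3))^2 - 4*A*(A*(t2*t3)))" by algebra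
  also have "\<dots> = K*(a^2*(A - C)^2 + b2*B^2) - (B^2 - 4*A*C)" unfolding vs vp by algebra
  also have "\<dots> = K*(c^4*K^2 + 2*(2*a^2-c^2)*K - 3)*(a^2*(t1^2-1)^2+4*b2*t1^2)"
    unfolding A_def B_def C_def AA_def BB_def CC_def b2_def by algebra
  finally have "K*(c^4*K^2 + 2*(2*a^2-c^2)*K - 3)*(a^2*(t1^2-1)^2+4*b2*t1^2) = 0"
    using E23 unfolding b2_def by simp
  moreover have "a^2*(t1^2-1)^2+4*b2*t1^2 > 0"
  proof (cases "t1 = 0")
    case True thus ?thesis using a by simp
  next
    case False thus ?thesis using b2p by (simp add: add_nonneg_pos)
  qed
  ultimately show qK: "c^4*K^2 + 2*(2*a^2-c^2)*K - 3 = 0" using Kp by simp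
  have hNX: "A^4 * NX3 a c t1 t2 t3 = (eE a c t1)^2 * NX2 a c K t1"
    using NX_sp NX_hom[of A a c t1 "t2+t3" "t2*t3" K] NX_q vs vp unfolding A_def B_def C_def by simp
  have hNY: "A^4 * NY3 a c t1 t2 t3 = (eE a c t1)^2 * NY2 a c K t1"
    using NY_sp NY_hom[of A a c t1 "t2+t3" "t2*t3" K] NY_q vs vp unfolding A_def B_def C_def by simp
  have hDN: "A^2 * DN3 a c t1 t2 t3 = (eE a c t1)^2 * DN2 a c K t1"
    using DN_sp DN_hom[of A a c t1 "t2+t3" "t2*t3" K] DN_q vs vp unfolding A_def B_def C_def by simp
  have hEE: "A^2 * EE3 a c t1 t2 t3 = (eE a c t1)^2 * EE2 a c K t1"
    using EE_sp EE_hom[of A a c t1 "t2+t3" "t2*t3" K] EE_q vs vp unfolding A_def B_def C_def by simp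
  have EEp: "EE3 a c t1 t2 t3 > 0" unfolding EE3_def using eE_pos[OF a] by simp
  have DNp: "DN3 a c t1 t2 t3 > 0"
  proof -
    have "(t1-t2)^2*eE a c t3 > 0" using d eE_pos[OF a] by simp
    moreover have "(t2-t3)^2*eE a c t1 \<ge> 0" "(t1-t3)^2*eE a c t2 \<ge> 0"
      using eE_pos[OF a] by (simp_all add: less_imp_le)
    ultimately show ?thesis unfolding DN3_def by linarith
  qed
  define W where "W = (eE a c t1)^2*DN2 a c K t1*EE2 a c K t1"
  have e1p: "eE a c t1 > 0" using eE_pos[OF a] by simp
  have WW: "A^4*(DN3 a c t1 t2 t3*EE3 a c t1 t2 t3) = (eE a c t1)^2 * W"
    using hDN hEE unfolding W_def by algebra
  have W0: "W \<noteq> 0" using WW A0 DNp EEp e1p by (metis mult_eq_0_iff power_not_zero less_irrefl)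
  have QX: "NX3 a c t1 t2 t3/(DN3 a c t1 t2 t3*EE3 a c t1 t2 t3) = NX2 a c K t1 / W"
  proof -
    have "NX3 a c t1 t2 t3/(DN3 a c t1 t2 t3*EE3 a c t1 t2 t3)
       = (A^4 * NX3 a c t1 t2 t3)/(A^4*(DN3 a c t1 t2 t3*EE3 a c t1 t2 t3))" using A0 by simp
    also have "\<dots> = NX2 a c K t1 / W" unfolding hNX WW using e1p by simp
    finally show ?thesis .
  qed
  have QY: "NY3 a c t1 t2 t3/(DN3 a c t1 t2 t3*EE3 a c t1 t2 t3) = NY2 a c K t1 / W"
  proof -
    have "NY3 a c t1 t2 t3/(DN3 a c t1 t2 t3*EE3 a c t1 t2 t3)
       = (A^4 * NY3 a c t1 t2 t3)/(A^4*(DN3 a c t1 t2 t3*EE3 a c t1 t2 t3))" using A0 by simp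
    also have "\<dots> = NY2 a c K t1 / W" unfolding hNY WW using e1p by simp
    finally show ?thesis .
  qed
  have Z: "4*a^2*(2*(a^2-c^2)^2*NX2 a c K t1 - c*(c^4*K - a^2 + 2*(a^2-c^2))*W)^2
     + 16*a^2*(a^2-c^2)^5*(NY2 a c K t1)^2
     - (-4*a^4+4*a^2*(a^2-c^2)-2*(a^2-c^2)^2+(2*a^2-(a^2-c^2))*(c^4*K+a^2+(a^2-c^2)))^2*W^2 = 0"
    using Zid[OF qK] unfolding W_def .
  show "(NX3 a c t1 t2 t3/(DN3 a c t1 t2 t3*EE3 a c t1 t2 t3) - c*(c^4*K - a^2 + 2*(a^2-c^2))/(2*(a^2-c^2)^2))^2
         + (a^2-c^2)*(NY3 a c t1 t2 t3/(DN3 a c t1 t2 t3*EE3 a c t1 t2 t3))^2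
         = ((-4*a^4+4*a^2*(a^2-c^2)-2*(a^2-c^2)^2+(2*a^2-(a^2-c^2))*(c^4*K+a^2+(a^2-c^2)))/(4*a*(a^2-c^2)^2))^2"
    unfolding QX QY by (rule fin_lem[OF W0 _ _ Z]) (use a b2p in \<open>simp_all add: b2_def\<close>)
qed

lemma ell_param:
  fixes a b :: real and P :: complex
  assumes a: "a \<noteq> 0" and b: "b \<noteq> 0" and E: "on_ellipse a b P" and P: "P \<noteq> Complex 0 (-b)"
  shows "\<exists>t. P = Complex (2*a*t/(1+t^2)) (b*(1-t^2)/(1+t^2))"
proof -
  define u where "u = Re P / a"
  define w where "w = Im P / b"
  have uw: "u^2 + w^2 = 1" using E a b unfolding on_ellipse_def u_def w_def by (simp add: power_divide)
  have w1: "1 + w \<noteq> 0"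
  proof
    assume "1 + w = 0"
    hence "w = -1" by simp
    hence "u = 0" using uw by simp
    hence "Re P = 0" "Im P = -b" using a b \<open>w = -1\<close> unfolding u_def w_def by (auto simp: field_simps)
    hence "P = Complex 0 (-b)" by (simp add: complex_eq_iff)
    thus False using P by simp
  qed
  define t where "t = u/(1+w)"
  have t2: "t^2 = (1-w)/(1+w)"
  proof -
    have "t^2 = u^2/(1+w)^2" by (simp add: t_def power_divide)
    also have "u^2 = (1-w)*(1+w)" using uw by (simp add: algebra_simps power2_eq_square)
    finally show ?thesis using w1 by (simp add: power2_eq_square)
  qed
  have tt: "1 + t^2 = 2/(1+w)" unfolding t2 using w1 by (simp add: field_simps)
  have "2*a*t/(1+t^2) = a*t*(1+w)" unfolding tt using w1 by (simp add: field_simps)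
  also have "\<dots> = a*u" unfolding t_def using w1 by simp
  also have "\<dots> = Re P" unfolding u_def using a by simp
  finally have "2*a*t/(1+t^2) = Re P" .
  moreover have "b*(1-t^2)/(1+t^2) = Im P"
  proof -
    have "1 - t^2 = 2 - (1+t^2)" by simp
    moreover have "1 + t^2 > 0" by (simp add: add_pos_nonneg)
    ultimately have "(1-t^2)/(1+t^2) = 2/(1+t^2) - 1" by (simp add: field_simps)
    also have "\<dots> = w" unfolding tt using w1 by (simp add: field_simps)
    finally show ?thesis unfolding w_def using b by (simp add: field_simps)
  qed
  ultimately show ?thesis by (intro exI[of _ t]) (simp add: complex_eq_iff)
qed

lemma refl_real:
  fixes a b x y xq yq xr yr sq sr :: real
  assumes a: "a \<noteq> 0" and b: "b \<noteq> 0"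
    and EP: "x^2/a^2 + y^2/b^2 = 1" and EQ: "xq^2/a^2 + yq^2/b^2 = 1" and ER: "xr^2/a^2 + yr^2/b^2 = 1"
    and sq: "sq > 0" "sq^2 = (xq-x)^2 + (yq-y)^2"
    and sr: "sr > 0" "sr^2 = (xr-x)^2 + (yr-y)^2"
    and cr: "(x/a^2) * ((yq-y)/sq + (yr-y)/sr) - (y/b^2) * ((xq-x)/sq + (xr-x)/sr) = 0"
  shows "(1 - x*xq/a^2 - y*yq/b^2)/sq = (1 - x*xr/a^2 - y*yr/b^2)/sr"
proof -
  define ux where "ux = (xq-x)/sq"
  define uy where "uy = (yq-y)/sq"
  define vx where "vx = (xr-x)/sr"
  define vy where "vy = (yr-y)/sr"
  define Nx where "Nx = x/a^2"
  define Ny where "Ny = y/b^2"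
  have "ux^2 + uy^2 = ((xq-x)^2+(yq-y)^2)/sq^2" unfolding ux_def uy_def by (simp add: power_divide add_divide_distrib)
  hence u1: "ux^2 + uy^2 = 1" unfolding sq(2)[symmetric] using sq(1) by simp
  have "vx^2 + vy^2 = ((xr-x)^2+(yr-y)^2)/sr^2" unfolding vx_def vy_def by (simp add: power_divide add_divide_distrib)
  hence v1: "vx^2 + vy^2 = 1" unfolding sr(2)[symmetric] using sr(1) by simp
  have cr': "Nx*(uy+vy) - Ny*(ux+vx) = 0" using cr unfolding Nx_def Ny_def ux_def uy_def vx_def vy_def by simp
  have gq: "ux*Nx + uy*Ny = -((1 - x*xq/a^2 - y*yq/b^2)/sq)"
  proof -
    have "ux*Nx + uy*Ny = ((xq*x/a^2 + yq*y/b^2) - (x^2/a^2+y^2/b^2))/sq"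
      unfolding ux_def uy_def Nx_def Ny_def using sq a b by (simp add: field_simps power2_eq_square)
    thus ?thesis using EP sq(1) by (simp add: field_simps)
  qed
  have gr: "vx*Nx + vy*Ny = -((1 - x*xr/a^2 - y*yr/b^2)/sr)"
  proof -
    have "vx*Nx + vy*Ny = ((xr*x/a^2 + yr*y/b^2) - (x^2/a^2+y^2/b^2))/sr"
      unfolding vx_def vy_def Nx_def Ny_def using sr a b by (simp add: field_simps power2_eq_square)
    thus ?thesis using EP sr(1) by (simp add: field_simps)
  qed
  have gpos: "2*(1 - x*xq/a^2 - y*yq/b^2) = (x-xq)^2/a^2 + (y-yq)^2/b^2"
    if "xq^2/a^2 + yq^2/b^2 = 1" for xq yq
  proof -
    have "((x-xq)^2/a^2 + (y-yq)^2/b^2) = (x^2/a^2 + y^2/b^2) + (xq^2/a^2+yq^2/b^2) - 2*(x*xq/a^2) - 2*(y*yq/b^2)"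
      by (simp add: power2_diff add_divide_distrib diff_divide_distrib algebra_simps)
    thus ?thesis using EP that by argo
  qed
  have zw: "(ux-vx)*(ux+vx) + (uy-vy)*(uy+vy) = 0"
  proof -
    have "(ux-vx)*(ux+vx) + (uy-vy)*(uy+vy) = (ux^2+uy^2) - (vx^2+vy^2)" by algebra
    thus ?thesis using u1 v1 by simp
  qed
  show ?thesis
  proof (cases "ux+vx = 0 \<and> uy+vy = 0")
    case True
    have "ux*Nx + uy*Ny + (vx*Nx + vy*Ny) = (ux+vx)*Nx + (uy+vy)*Ny" by algebra
    also have "\<dots> = 0" using True by simp
    finally have "(1 - x*xq/a^2 - y*yq/b^2)/sq + (1 - x*xr/a^2 - y*yr/b^2)/sr = 0" using gq gr by simp
    moreover have "(1 - x*xq/a^2 - y*yq/b^2) > 0"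
    proof -
      have "(x-xq)^2/a^2 + (y-yq)^2/b^2 > 0"
      proof (cases "x = xq")
        case True
        hence "y \<noteq> yq" using sq by auto
        thus ?thesis using True b by (simp add: add_pos_nonneg)
      next
        case False thus ?thesis using a by (simp add: add_pos_nonneg)
      qed
      thus ?thesis using gpos[OF EQ] by simp
    qed
    moreover have "(1 - x*xr/a^2 - y*yr/b^2) \<ge> 0"
    proof -
      have "(x-xr)^2/a^2 + (y-yr)^2/b^2 \<ge> 0" by simp
      thus ?thesis using gpos[OF ER] by argo
    qed
    ultimately have False using divide_pos_pos[OF _ sq(1)] divide_nonneg_pos[OF _ sr(1)]
      by (metis add_pos_nonneg less_irrefl)
    thus ?thesis ..
  next
    case False
    define z1 where "z1 = ux - vx"
    define z2 where "z2 = uy - vy"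
    have eq: "Ny*(ux+vx) = Nx*(uy+vy)" using cr' by simp
    have zw': "z1*(ux+vx) + z2*(uy+vy) = 0" using zw unfolding z1_def z2_def .
    have "(z1*Nx + z2*Ny)*(ux+vx) = z1*Nx*(ux+vx) + z2*(Ny*(ux+vx))" by algebra
    also have "\<dots> = z1*Nx*(ux+vx) + z2*(Nx*(uy+vy))" unfolding eq ..
    also have "\<dots> = Nx*(z1*(ux+vx) + z2*(uy+vy))" by algebra
    finally have h1: "(z1*Nx + z2*Ny)*(ux+vx) = 0" using zw' by simp
    have "(z1*Nx + z2*Ny)*(uy+vy) = z1*(Nx*(uy+vy)) + z2*Ny*(uy+vy)" by algebra
    also have "\<dots> = z1*(Ny*(ux+vx)) + z2*Ny*(uy+vy)" unfolding eq ..
    also have "\<dots> = Ny*(z1*(ux+vx) + z2*(uy+vy))" by algebra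
    finally have h2: "(z1*Nx + z2*Ny)*(uy+vy) = 0" using zw' by simp
    have "z1*Nx + z2*Ny = 0" using h1 h2 False by auto
    hence "ux*Nx + uy*Ny = vx*Nx + vy*Ny" unfolding z1_def z2_def by algebra
    thus ?thesis using gq gr by simp
  qed
qed

definition gg :: "real \<Rightarrow> real \<Rightarrow> complex \<Rightarrow> complex \<Rightarrow> real" where
  "gg a b P Q = 1 - Re P * Re Q / a^2 - Im P * Im Q / b^2"

lemma gg_sym: "gg a b P Q = gg a b Q P"
  unfolding gg_def by (simp add: mult.commute)

lemma cmod_sq: "(cmod z)^2 = (Re z)^2 + (Im z)^2"
  by (simp add: cmod_power2)

lemma param_pt: "P = Complex (2*a*t/(1+t^2)) (b*(1-t^2)/(1+t^2)) \<Longrightarrow>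
   Re P = 2*a*t/(1+t^2) \<and> Im P = b*(1-t^2)/(1+t^2)"
  by simp

lemma gg_param:
  fixes a b r t :: real
  assumes a: "a \<noteq> 0" and b: "b \<noteq> 0"
  shows "gg a b (Complex (2*a*r/(1+r^2)) (b*(1-r^2)/(1+r^2))) (Complex (2*a*t/(1+t^2)) (b*(1-t^2)/(1+t^2)))
     = 2*(r-t)^2/((1+r^2)*(1+t^2))"
proof -
  have "1+r^2 > 0" "1+t^2 > 0" by (simp_all add: add_pos_nonneg)
  hence i1: "inverse (1+r^2) * (1+r^2) = 1" and i2: "inverse (1+t^2) * (1+t^2) = 1" by simp_all
  have i3: "inverse (a^2) * a^2 = 1" and i4: "inverse (b^2) * b^2 = 1" using a b by simp_all
  show ?thesis unfolding gg_def complex.sel divide_inverse inverse_mult_distrib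
    using i1 i2 i3 i4 by algebra
qed

lemma dist_param:
  fixes a b r t :: real
  shows "(cmod (Complex (2*a*r/(1+r^2)) (b*(1-r^2)/(1+r^2)) - Complex (2*a*t/(1+t^2)) (b*(1-t^2)/(1+t^2))))^2
     = 4*(r-t)^2*(a^2*(1-r*t)^2 + b^2*(r+t)^2)/((1+r^2)*(1+t^2))^2"
proof -
  have "1+r^2 > 0" "1+t^2 > 0" by (simp_all add: add_pos_nonneg)
  hence i1: "inverse (1+r^2) * (1+r^2) = 1" and i2: "inverse (1+t^2) * (1+t^2) = 1" by simp_all
  have "(cmod (Complex (2*a*r/(1+r^2)) (b*(1-r^2)/(1+r^2)) - Complex (2*a*t/(1+t^2)) (b*(1-t^2)/(1+t^2))))^2
     = (2*a*r/(1+r^2) - 2*a*t/(1+t^2))^2 + (b*(1-r^2)/(1+r^2) - b*(1-t^2)/(1+t^2))^2"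
    by (simp add: cmod_sq)
  also have "\<dots> = 4*(r-t)^2*(a^2*(1-r*t)^2 + b^2*(r+t)^2)/((1+r^2)*(1+t^2))^2"
    unfolding divide_inverse inverse_mult_distrib power_mult_distrib power_inverse[symmetric] using i1 i2 by algebra
  finally show ?thesis .
qed

lemma E_lem:
  fixes k sv ti tj M D :: real
  assumes d: "ti \<noteq> tj" and D: "D \<noteq> 0"
    and s2: "sv^2 = 4*(ti-tj)^2*M/D^2" and ks: "k * sv = 2*(ti-tj)^2/D"
  shows "k^2*M = (ti-tj)^2"
proof -
  have "k^2*(4*(ti-tj)^2*M/D^2) = (2*(ti-tj)^2/D)^2" using s2 ks by (metis power_mult_distrib)
  hence "(4*(ti-tj)^2/D^2)*(k^2*M) = (4*(ti-tj)^2/D^2)*(ti-tj)^2"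
    by (simp add: power_divide field_simps power2_eq_square)
  moreover have "4*(ti-tj)^2/D^2 \<noteq> 0" using d D by simp
  ultimately show ?thesis by simp
qed

lemma focal_param:
  fixes a b c t :: real
  assumes c: "c^2 = a^2 - b^2" "0 < c" "c < a"
  shows "cmod (Complex (2*a*t/(1+t^2)) (b*(1-t^2)/(1+t^2)) - Complex (-c) 0) = (a*(1+t^2)+2*c*t)/(1+t^2)"
proof -
  have T: "1+t^2 > 0" by (simp add: add_pos_nonneg)
  have e: "a*(1+t^2)+2*c*t > 0"
  proof -
    have "a*(1+t^2) + 2*c*t = (a-c)*(1+t^2) + c*(1+t)^2" by (simp add: algebra_simps power2_eq_square)
    moreover have "(a-c)*(1+t^2) > 0" using c T by simp
    moreover have "c*(1+t)^2 \<ge> 0" using c by simp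
    ultimately show ?thesis by linarith
  qed
  have "(cmod (Complex (2*a*t/(1+t^2)) (b*(1-t^2)/(1+t^2)) - Complex (-c) 0))^2
     = (2*a*t/(1+t^2) + c)^2 + (b*(1-t^2)/(1+t^2))^2" by (simp add: cmod_sq)
  also have "\<dots> = ((2*a*t + c*(1+t^2))^2 + b^2*(1-t^2)^2)/(1+t^2)^2"
  proof -
    have h: "2*a*t/(1+t^2) + c = (2*a*t + c*(1+t^2))/(1+t^2)" using T by (simp add: field_simps)
    have e1: "(2*a*t/(1+t^2) + c)^2 = (2*a*t + c*(1+t^2))^2/(1+t^2)^2" by (simp only: h power_divide)
    have e2: "(b*(1-t^2)/(1+t^2))^2 = b^2*(1-t^2)^2/(1+t^2)^2" by (simp add: power_divide power_mult_distrib)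
    show ?thesis unfolding e1 e2 by (simp add: add_divide_distrib)
  qed
  also have "(2*a*t + c*(1+t^2))^2 + b^2*(1-t^2)^2 = (a*(1+t^2)+2*c*t)^2"
  proof -
    have "b^2 = a^2 - c^2" using c by simp
    thus ?thesis by (simp add: algebra_simps power2_eq_square) algebra
  qed
  finally have "(cmod (Complex (2*a*t/(1+t^2)) (b*(1-t^2)/(1+t^2)) - Complex (-c) 0))^2
     = ((a*(1+t^2)+2*c*t)/(1+t^2))^2" by (simp add: power_divide)
  thus ?thesis using e T by (simp add: power2_eq_iff_nonneg)
qed

lemma inv_dist:
  fixes \<rho> :: real and f P Q :: complex
  assumes "P \<noteq> f" "Q \<noteq> f"
  shows "cmod (inversion \<rho> f P - inversion \<rho> f Q) = \<rho>^2 * cmod (P - Q) / (cmod (P-f) * cmod (Q-f))"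
proof -
  define ux where "ux = Re (P - f)"
  define uy where "uy = Re (P - f)"
  define uu where "uu = P - f"
  define ww where "ww = Q - f"
  have uu0: "uu \<noteq> 0" "ww \<noteq> 0" using assms unfolding uu_def ww_def by auto
  define du where "du = (Re uu)^2 + (Im uu)^2"
  define dv where "dv = (Re ww)^2 + (Im ww)^2"
  have du: "du > 0" unfolding du_def using uu0 by (simp add: complex_eq_iff sum_power2_gt_zero_iff)
  have dv: "dv > 0" unfolding dv_def using uu0 by (simp add: complex_eq_iff sum_power2_gt_zero_iff)
  have cu: "(cmod uu)^2 = du" "(cmod ww)^2 = dv" unfolding du_def dv_def by (simp_all add: cmod_sq)
  have i1: "(\<rho>/cmod(P-f))^2 = \<rho>^2/du" using cu unfolding uu_def by (simp add: power_divide)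
  have i2: "(\<rho>/cmod(Q-f))^2 = \<rho>^2/dv" using cu unfolding ww_def by (simp add: power_divide)
  have "inversion \<rho> f P - inversion \<rho> f Q = of_real (\<rho>^2/du) * uu - of_real (\<rho>^2/dv) * ww"
    unfolding inversion_def i1 i2 uu_def ww_def by simp
  hence "(cmod (inversion \<rho> f P - inversion \<rho> f Q))^2
     = (\<rho>^2/du * Re uu - \<rho>^2/dv * Re ww)^2 + (\<rho>^2/du * Im uu - \<rho>^2/dv * Im ww)^2"
    by (simp add: cmod_sq)
  also have "\<dots> = \<rho>^4 * ((Re uu - Re ww)^2 + (Im uu - Im ww)^2) / (du*dv)"
  proof -
    have x: "\<rho>^2/du * Re uu - \<rho>^2/dv * Re ww = \<rho>^2*(Re uu*dv - Re ww * du)/(du*dv)" using du dv by (simp add: field_simps)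
    have y: "\<rho>^2/du * Im uu - \<rho>^2/dv * Im ww = \<rho>^2*(Im uu*dv - Im ww * du)/(du*dv)" using du dv by (simp add: field_simps)
    have z: "(Re uu*dv - Re ww * du)^2 + (Im uu*dv - Im ww * du)^2 = du*dv*((Re uu - Re ww)^2 + (Im uu - Im ww)^2)"
      unfolding du_def dv_def by algebra
    have "(\<rho>^2*(Re uu*dv - Re ww * du)/(du*dv))^2 + (\<rho>^2*(Im uu*dv - Im ww * du)/(du*dv))^2
        = \<rho>^4*((Re uu*dv - Re ww * du)^2 + (Im uu*dv - Im ww * du)^2)/(du*dv)^2"
      unfolding divide_inverse power_inverse[symmetric] by algebra
    also have "\<dots> = \<rho>^4 * ((Re uu - Re ww)^2 + (Im uu - Im ww)^2) / (du*dv)"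
      unfolding z using du dv by (simp add: power2_eq_square)
    finally show ?thesis unfolding x y .
  qed
  also have "(Re uu - Re ww)^2 + (Im uu - Im ww)^2 = (cmod (P - Q))^2"
    unfolding uu_def ww_def by (simp add: cmod_sq)
  finally have "(cmod (inversion \<rho> f P - inversion \<rho> f Q))^2 = (\<rho>^2 * cmod (P - Q) / (cmod uu * cmod ww))^2"
    using cu by (simp add: power_divide power_mult_distrib)
  thus ?thesis unfolding uu_def ww_def
    by (simp add: power2_eq_iff_nonneg)
qed


lemma refl_cplx:
  fixes a b :: real and P Q R :: complex
  assumes a: "a \<noteq> 0" and b: "b \<noteq> 0"
    and EP: "on_ellipse a b P" and EQ: "on_ellipse a b Q" and ER: "on_ellipse a b R"
    and PQ: "P \<noteq> Q" and PR: "P \<noteq> R" and nb: "normal_bisects a b P Q R"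
  shows "gg a b P Q / cmod (Q - P) = gg a b P R / cmod (R - P)"
proof -
  have sq: "cmod (Q - P) > 0" "(cmod (Q-P))^2 = (Re Q - Re P)^2 + (Im Q - Im P)^2"
    using PQ by (simp_all add: cmod_sq)
  have sr: "cmod (R - P) > 0" "(cmod (R-P))^2 = (Re R - Re P)^2 + (Im R - Im P)^2"
    using PR by (simp_all add: cmod_sq)
  have cr: "(Re P/a^2) * ((Im Q - Im P)/cmod (Q-P) + (Im R - Im P)/cmod (R-P))
      - (Im P/b^2) * ((Re Q - Re P)/cmod (Q-P) + (Re R - Re P)/cmod (R-P)) = 0"
    using nb unfolding normal_bisects_def cross2_def ell_normal_def by simp
  show ?thesis unfolding gg_def
    by (rule refl_real[OF a b _ _ _ sq sr cr]) (use EP EQ ER in \<open>simp_all add: on_ellipse_def\<close>)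
qed

lemma incenter_inv:
  fixes \<rho> :: real and f P1 P2 P3 :: complex
  assumes rho: "\<rho> > 0" and n: "P1 \<noteq> f" "P2 \<noteq> f" "P3 \<noteq> f"
    and S: "cmod (P2-P3)*cmod (P1-f) + cmod (P1-P3)*cmod (P2-f) + cmod (P1-P2)*cmod (P3-f) > 0"
  shows "incenter (inversion \<rho> f P1) (inversion \<rho> f P2) (inversion \<rho> f P3)
    = f + of_real (\<rho>^2) * ((of_real (cmod (P2-P3)/cmod (P1-f)) * (P1-f) + of_real (cmod (P1-P3)/cmod (P2-f)) * (P2-f)
         + of_real (cmod (P1-P2)/cmod (P3-f)) * (P3-f))
       / of_real (cmod (P2-P3)*cmod (P1-f) + cmod (P1-P3)*cmod (P2-f) + cmod (P1-P2)*cmod (P3-f)))"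
proof -
  define d1 where "d1 = cmod (P1-f)"
  define d2 where "d2 = cmod (P2-f)"
  define d3 where "d3 = cmod (P3-f)"
  define qa where "qa = cmod (P2-P3)"
  define qb where "qb = cmod (P1-P3)"
  define qc where "qc = cmod (P1-P2)"
  define SS where "SS = qa*d1 + qb*d2 + qc*d3"
  have d: "d1 > 0" "d2 > 0" "d3 > 0" using n unfolding d1_def d2_def d3_def by auto
  have Sp: "SS > 0" using S unfolding SS_def qa_def qb_def qc_def d1_def d2_def d3_def by simp
  have l1: "cmod (inversion \<rho> f P2 - inversion \<rho> f P3) = \<rho>^2*qa/(d2*d3)"
    using inv_dist[OF n(2) n(3)] unfolding qa_def d2_def d3_def by simp
  have l2: "cmod (inversion \<rho> f P3 - inversion \<rho> f P1) = \<rho>^2*qb/(d1*d3)"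
    using inv_dist[OF n(3) n(1)] unfolding qb_def d1_def d3_def by (simp add: norm_minus_commute mult.commute)
  have l3: "cmod (inversion \<rho> f P1 - inversion \<rho> f P2) = \<rho>^2*qc/(d1*d2)"
    using inv_dist[OF n(1) n(2)] unfolding qc_def d1_def d2_def by simp
  have iv: "inversion \<rho> f P = f + of_real (\<rho>^2/(cmod (P-f))^2) * (P - f)" for P
    unfolding inversion_def by (simp add: power_divide)
  have i1: "inverse d1 * d1 = 1" "inverse d2 * d2 = 1" "inverse d3 * d3 = 1" "inverse \<rho> * \<rho> = 1"
     "inverse SS * SS = 1"
    using d rho Sp by simp_all
  have L: "\<rho>^2*qa/(d2*d3) + \<rho>^2*qb/(d1*d3) + \<rho>^2*qc/(d1*d2) = \<rho>^2*SS*(inverse d1*inverse d2*inverse d3)"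
    unfolding SS_def divide_inverse inverse_mult_distrib using i1 by algebra
  show ?thesis
    unfolding incenter_def unfolding l1 l2 l3 unfolding iv
    unfolding d1_def[symmetric] d2_def[symmetric] d3_def[symmetric] qa_def[symmetric] qb_def[symmetric] qc_def[symmetric]
      SS_def[symmetric] L
    apply (simp only: complex_eq_iff Re_divide_of_real Im_divide_of_real Re_complex_of_real Im_complex_of_real
       plus_complex.sel times_complex.sel minus_complex.sel mult_zero_left mult_zero_right diff_zero add_0_right add_0_left)
    apply (unfold divide_inverse inverse_mult_distrib inverse_inverse_eq power_inverse[symmetric])
    apply (intro conjI)
    using i1 SS_def by algebra+
qed

lemma ratio_lem1: fixes N D T E :: real assumes "T \<noteq> 0" "E \<noteq> 0" "D \<noteq> 0"
  shows "(2*N/(T*E))/(2*D/T) = N/(D*E)" using assms by (simp add: field_simps)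
lemma ratio_lem2: fixes N D T E b :: real assumes "T \<noteq> 0" "E \<noteq> 0" "D \<noteq> 0"
  shows "(2*b*N/(T*E))/(2*D/T) = b*(N/(D*E))" using assms by (simp add: field_simps)

lemma Qparam:
  fixes a b c t1 t2 t3 :: real
  assumes c: "0 < c" "c < a" and d: "t1 \<noteq> t2" "t1 \<noteq> t3" "t2 \<noteq> t3"
  shows "(2*(t2-t3)^2/((1+t2^2)*(1+t3^2)) / (eE a c t1/(1+t1^2)) * (2*a*t1/(1+t1^2) + c)
        + 2*(t1-t3)^2/((1+t1^2)*(1+t3^2)) / (eE a c t2/(1+t2^2)) * (2*a*t2/(1+t2^2) + c)
        + 2*(t1-t2)^2/((1+t1^2)*(1+t2^2)) / (eE a c t3/(1+t3^2)) * (2*a*t3/(1+t3^2) + c))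
      / (2*(t2-t3)^2/((1+t2^2)*(1+t3^2)) * (eE a c t1/(1+t1^2))
        + 2*(t1-t3)^2/((1+t1^2)*(1+t3^2)) * (eE a c t2/(1+t2^2))
        + 2*(t1-t2)^2/((1+t1^2)*(1+t2^2)) * (eE a c t3/(1+t3^2)))
     = NX3 a c t1 t2 t3/(DN3 a c t1 t2 t3*EE3 a c t1 t2 t3)"
   and "(2*(t2-t3)^2/((1+t2^2)*(1+t3^2)) / (eE a c t1/(1+t1^2)) * (b*(1-t1^2)/(1+t1^2))
        + 2*(t1-t3)^2/((1+t1^2)*(1+t3^2)) / (eE a c t2/(1+t2^2)) * (b*(1-t2^2)/(1+t2^2))
        + 2*(t1-t2)^2/((1+t1^2)*(1+t2^2)) / (eE a c t3/(1+t3^2)) * (b*(1-t3^2)/(1+t3^2)))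
      / (2*(t2-t3)^2/((1+t2^2)*(1+t3^2)) * (eE a c t1/(1+t1^2))
        + 2*(t1-t3)^2/((1+t1^2)*(1+t3^2)) * (eE a c t2/(1+t2^2))
        + 2*(t1-t2)^2/((1+t1^2)*(1+t2^2)) * (eE a c t3/(1+t3^2)))
     = b * (NY3 a c t1 t2 t3/(DN3 a c t1 t2 t3*EE3 a c t1 t2 t3))"
proof -
  have T: "1+t1^2 > 0" "1+t2^2 > 0" "1+t3^2 > 0" by (simp_all add: add_pos_nonneg)
  have e: "eE a c t1 > 0" "eE a c t2 > 0" "eE a c t3 > 0" using eE_pos[OF c] by simp_all
  have iv: "inverse (1+t1^2) * (1+t1^2) = 1" "inverse (1+t2^2) * (1+t2^2) = 1" "inverse (1+t3^2) * (1+t3^2) = 1"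
    "inverse (eE a c t1) * eE a c t1 = 1" "inverse (eE a c t2) * eE a c t2 = 1" "inverse (eE a c t3) * eE a c t3 = 1"
    using T e by simp_all
  have DNp: "DN3 a c t1 t2 t3 > 0"
  proof -
    have "(t1-t2)^2*eE a c t3 > 0" using d e by simp
    moreover have "(t2-t3)^2*eE a c t1 \<ge> 0" "(t1-t3)^2*eE a c t2 \<ge> 0"
      using e by (simp_all add: less_imp_le)
    ultimately show ?thesis unfolding DN3_def by linarith
  qed
  have EEp: "EE3 a c t1 t2 t3 > 0" unfolding EE3_def using e by simp
  have Den: "2*(t2-t3)^2/((1+t2^2)*(1+t3^2)) * (eE a c t1/(1+t1^2))
        + 2*(t1-t3)^2/((1+t1^2)*(1+t3^2)) * (eE a c t2/(1+t2^2))
        + 2*(t1-t2)^2/((1+t1^2)*(1+t2^2)) * (eE a c t3/(1+t3^2))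
      = 2*DN3 a c t1 t2 t3 / ((1+t1^2)*(1+t2^2)*(1+t3^2))"
    unfolding DN3_def divide_inverse inverse_mult_distrib by algebra
  have NumX: "2*(t2-t3)^2/((1+t2^2)*(1+t3^2)) / (eE a c t1/(1+t1^2)) * (2*a*t1/(1+t1^2) + c)
        + 2*(t1-t3)^2/((1+t1^2)*(1+t3^2)) / (eE a c t2/(1+t2^2)) * (2*a*t2/(1+t2^2) + c)
        + 2*(t1-t2)^2/((1+t1^2)*(1+t2^2)) / (eE a c t3/(1+t3^2)) * (2*a*t3/(1+t3^2) + c)
      = 2*NX3 a c t1 t2 t3 / ((1+t1^2)*(1+t2^2)*(1+t3^2)*EE3 a c t1 t2 t3)"
    unfolding NX3_def EE3_def divide_inverse inverse_mult_distrib inverse_inverse_eq using iv by algebra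
  have NumY: "2*(t2-t3)^2/((1+t2^2)*(1+t3^2)) / (eE a c t1/(1+t1^2)) * (b*(1-t1^2)/(1+t1^2))
        + 2*(t1-t3)^2/((1+t1^2)*(1+t3^2)) / (eE a c t2/(1+t2^2)) * (b*(1-t2^2)/(1+t2^2))
        + 2*(t1-t2)^2/((1+t1^2)*(1+t2^2)) / (eE a c t3/(1+t3^2)) * (b*(1-t3^2)/(1+t3^2))
      = 2*b*NY3 a c t1 t2 t3 / ((1+t1^2)*(1+t2^2)*(1+t3^2)*EE3 a c t1 t2 t3)"
    unfolding NY3_def EE3_def divide_inverse inverse_mult_distrib inverse_inverse_eq using iv by algebra
  show "(2*(t2-t3)^2/((1+t2^2)*(1+t3^2)) / (eE a c t1/(1+t1^2)) * (2*a*t1/(1+t1^2) + c)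
        + 2*(t1-t3)^2/((1+t1^2)*(1+t3^2)) / (eE a c t2/(1+t2^2)) * (2*a*t2/(1+t2^2) + c)
        + 2*(t1-t2)^2/((1+t1^2)*(1+t2^2)) / (eE a c t3/(1+t3^2)) * (2*a*t3/(1+t3^2) + c))
      / (2*(t2-t3)^2/((1+t2^2)*(1+t3^2)) * (eE a c t1/(1+t1^2))
        + 2*(t1-t3)^2/((1+t1^2)*(1+t3^2)) * (eE a c t2/(1+t2^2))
        + 2*(t1-t2)^2/((1+t1^2)*(1+t2^2)) * (eE a c t3/(1+t3^2)))
     = NX3 a c t1 t2 t3/(DN3 a c t1 t2 t3*EE3 a c t1 t2 t3)"
    unfolding NumX Den by (rule ratio_lem1) (use T DNp EEp in simp_all)
  show "(2*(t2-t3)^2/((1+t2^2)*(1+t3^2)) / (eE a c t1/(1+t1^2)) * (b*(1-t1^2)/(1+t1^2))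
        + 2*(t1-t3)^2/((1+t1^2)*(1+t3^2)) / (eE a c t2/(1+t2^2)) * (b*(1-t2^2)/(1+t2^2))
        + 2*(t1-t2)^2/((1+t1^2)*(1+t2^2)) / (eE a c t3/(1+t3^2)) * (b*(1-t3^2)/(1+t3^2)))
      / (2*(t2-t3)^2/((1+t2^2)*(1+t3^2)) * (eE a c t1/(1+t1^2))
        + 2*(t1-t3)^2/((1+t1^2)*(1+t3^2)) * (eE a c t2/(1+t2^2))
        + 2*(t1-t2)^2/((1+t1^2)*(1+t2^2)) * (eE a c t3/(1+t3^2)))
     = b * (NY3 a c t1 t2 t3/(DN3 a c t1 t2 t3*EE3 a c t1 t2 t3))"
    unfolding NumY Den by (rule ratio_lem2) (use T DNp EEp in simp_all)
qed

lemma scale_lem: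
  fixes k A B C d1 d2 d3 X1 X2 X3 :: real
  assumes "k \<noteq> 0"
  shows "(A/k/d1*X1 + B/k/d2*X2 + C/k/d3*X3)/(A/k*d1 + B/k*d2 + C/k*d3)
       = (A/d1*X1 + B/d2*X2 + C/d3*X3)/(A*d1 + B*d2 + C*d3)"
proof -
  have "A/k/d1*X1 + B/k/d2*X2 + C/k/d3*X3 = (A/d1*X1 + B/d2*X2 + C/d3*X3)/k" unfolding divide_inverse by algebra
  moreover have "A/k*d1 + B/k*d2 + C/k*d3 = (A*d1 + B*d2 + C*d3)/k" unfolding divide_inverse by algebra
  ultimately show ?thesis using assms by simp
qed

lemma main_aux:
  fixes a b \<rho> :: real and P1 P2 P3 :: complex
  assumes a: "a > 0" and b: "b \<noteq> 0" and ab: "b^2 < a^2" and rho: "\<rho> > 0"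
    and tp: "three_periodic a b P1 P2 P3"
    and nv: "P1 \<noteq> Complex 0 (-b)" "P2 \<noteq> Complex 0 (-b)" "P3 \<noteq> Complex 0 (-b)"
  shows "dist (incenter (inversion \<rho> (Complex (- sqrt (a^2-b^2)) 0) P1) (inversion \<rho> (Complex (- sqrt (a^2-b^2)) 0) P2)
                        (inversion \<rho> (Complex (- sqrt (a^2-b^2)) 0) P3))
     (Complex (sqrt (a^2-b^2) * (- 1 + \<rho>^2 * (- 2 * a^2 + b^2 + 2 * sqrt (a^4 - a^2*b^2 + b^4)) / (2 * b^4))) 0)
     = \<rho>^2 * (- 2 * (sqrt (a^4 - a^2*b^2 + b^4))^2 + b^4 + (2*a^2 - b^2) * sqrt (a^4 - a^2*b^2 + b^4)) / (2*a*b^4)"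
proof -
  define c where "c = sqrt (a^2-b^2)"
  have c2: "c^2 = a^2 - b^2" unfolding c_def using ab by simp
  have cp: "0 < c" unfolding c_def using ab by simp
  have ca: "c < a"
  proof -
    have "c^2 < a^2" using c2 b by simp
    thus ?thesis using a cp by (simp add: power_less_imp_less_base)
  qed
  have bb: "a^2 - c^2 = b^2" using c2 by simp
  define \<delta> where "\<delta> = sqrt (a^4 - a^2*b^2 + b^4)"
  have dpos: "a^4 - a^2*b^2 + b^4 \<ge> 0"
  proof -
    have eq: "a^4 - a^2*b^2 + b^4 = (a^2 - b^2)^2 + a^2*b^2" by algebra
    show ?thesis by (subst eq) simp
  qed
  have d2: "\<delta>^2 = a^4 - a^2*b^2 + b^4" unfolding \<delta>_def using dpos by simp
  have dnn: "\<delta> \<ge> 0" unfolding \<delta>_def using dpos by simp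
  define f1 where "f1 = Complex (-c) 0"
  have a0: "a \<noteq> 0" using a by simp
  from tp have n12: "P1 \<noteq> P2" and n23: "P2 \<noteq> P3" and n13: "P1 \<noteq> P3"
    and E1: "on_ellipse a b P1" and E2: "on_ellipse a b P2" and E3: "on_ellipse a b P3"
    and nb1: "normal_bisects a b P1 P3 P2" and nb2: "normal_bisects a b P2 P1 P3"
    unfolding three_periodic_def by auto
  obtain t1 where P1: "P1 = Complex (2*a*t1/(1+t1^2)) (b*(1-t1^2)/(1+t1^2))" using ell_param[OF a0 b E1 nv(1)] by auto
  obtain t2 where P2: "P2 = Complex (2*a*t2/(1+t2^2)) (b*(1-t2^2)/(1+t2^2))" using ell_param[OF a0 b E2 nv(2)] by auto
  obtain t3 where P3: "P3 = Complex (2*a*t3/(1+t3^2)) (b*(1-t3^2)/(1+t3^2))" using ell_param[OF a0 b E3 nv(3)] by auto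
  have d12: "t1 \<noteq> t2" using n12 P1 P2 by auto
  have d13: "t1 \<noteq> t3" using n13 P1 P3 by auto
  have d23: "t2 \<noteq> t3" using n23 P2 P3 by auto
  have T: "1+t1^2 > 0" "1+t2^2 > 0" "1+t3^2 > 0" by (simp_all add: add_pos_nonneg)
  have g12: "gg a b P1 P2 = 2*(t1-t2)^2/((1+t1^2)*(1+t2^2))" unfolding P1 P2 by (rule gg_param[OF a0 b])
  have g13: "gg a b P1 P3 = 2*(t1-t3)^2/((1+t1^2)*(1+t3^2))" unfolding P1 P3 by (rule gg_param[OF a0 b])
  have g23: "gg a b P2 P3 = 2*(t2-t3)^2/((1+t2^2)*(1+t3^2))" unfolding P2 P3 by (rule gg_param[OF a0 b])
  have s12: "(cmod (P1-P2))^2 = 4*(t1-t2)^2*(a^2*(1-t1*t2)^2 + b^2*(t1+t2)^2)/((1+t1^2)*(1+t2^2))^2"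
    unfolding P1 P2 by (rule dist_param)
  have s13: "(cmod (P1-P3))^2 = 4*(t1-t3)^2*(a^2*(1-t1*t3)^2 + b^2*(t1+t3)^2)/((1+t1^2)*(1+t3^2))^2"
    unfolding P1 P3 by (rule dist_param)
  have s23: "(cmod (P2-P3))^2 = 4*(t2-t3)^2*(a^2*(1-t2*t3)^2 + b^2*(t2+t3)^2)/((1+t2^2)*(1+t3^2))^2"
    unfolding P2 P3 by (rule dist_param)
  have sp: "cmod (P1-P2) > 0" "cmod (P1-P3) > 0" "cmod (P2-P3) > 0" using n12 n13 n23 by auto
  have r1: "gg a b P1 P3 / cmod (P3 - P1) = gg a b P1 P2 / cmod (P2 - P1)"
    by (rule refl_cplx[OF a0 b E1 E3 E2 n13 n12 nb1])
  have n21: "P2 \<noteq> P1" using n12 by auto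
  have r2: "gg a b P2 P1 / cmod (P1 - P2) = gg a b P2 P3 / cmod (P3 - P2)"
    by (rule refl_cplx[OF a0 b E2 E1 E3 n21 n23 nb2])
  define k where "k = gg a b P1 P2 / cmod (P1 - P2)"
  have k13: "k = gg a b P1 P3 / cmod (P1 - P3)" using r1 unfolding k_def by (simp add: norm_minus_commute)
  have k23: "k = gg a b P2 P3 / cmod (P2 - P3)" using r2 unfolding k_def by (simp add: norm_minus_commute gg_sym)
  have kp: "k > 0" unfolding k_def g12 using d12 T sp by simp
  have ks12: "k * cmod (P1-P2) = 2*(t1-t2)^2/((1+t1^2)*(1+t2^2))" unfolding k_def g12[symmetric] using sp by simp
  have ks13: "k * cmod (P1-P3) = 2*(t1-t3)^2/((1+t1^2)*(1+t3^2))" unfolding k13 g13[symmetric] using sp by simp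
  have ks23: "k * cmod (P2-P3) = 2*(t2-t3)^2/((1+t2^2)*(1+t3^2))" unfolding k23 g23[symmetric] using sp by simp
  have Dn: "(1+t1^2)*(1+t2^2) \<noteq> 0" "(1+t1^2)*(1+t3^2) \<noteq> 0" "(1+t2^2)*(1+t3^2) \<noteq> 0" using T by simp_all
  have EE12: "k^2*(a^2*(1-t1*t2)^2 + (a^2-c^2)*(t1+t2)^2) = (t1-t2)^2"
    unfolding bb by (rule E_lem[OF d12 Dn(1) s12 ks12])
  have EE13: "k^2*(a^2*(1-t1*t3)^2 + (a^2-c^2)*(t1+t3)^2) = (t1-t3)^2"
    unfolding bb by (rule E_lem[OF d13 Dn(2) s13 ks13])
  have EE23: "k^2*(a^2*(1-t2*t3)^2 + (a^2-c^2)*(t2+t3)^2) = (t2-t3)^2"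
    unfolding bb by (rule E_lem[OF d23 Dn(3) s23 ks23])
  have kp2: "k^2 > 0" using kp by simp
  note cr = core[OF cp ca kp2 EE12 EE13 EE23 d12 d13 d23]
  have qK: "c^4*(k^2)^2 + 2*(2*a^2-c^2)*k^2 - 3 = 0" using cr(1) .
  have hd: "2*\<delta> = c^4*k^2 + a^2 + b^2"
  proof -
    have "(c^4*k^2 + a^2 + b^2)^2 = 4*(a^4 - a^2*b^2 + b^4)"
      using qK c2 by algebra
    moreover have nn: "c^4*k^2 + a^2 + b^2 \<ge> 0" by (intro add_nonneg_nonneg mult_nonneg_nonneg) simp_all
    ultimately have "sqrt (4*(a^4 - a^2*b^2 + b^4)) = c^4*k^2 + a^2 + b^2"
      by (metis real_sqrt_abs abs_of_nonneg)
    hence "c^4*k^2 + a^2 + b^2 = sqrt (4*(a^4 - a^2*b^2 + b^4))" by simp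
    also have "\<dots> = 2*\<delta>" unfolding \<delta>_def by (simp only: real_sqrt_mult real_sqrt_four)
    finally show ?thesis by simp
  qed
  have fd1: "cmod (P1 - f1) = eE a c t1/(1+t1^2)" unfolding P1 f1_def eE_def by (rule focal_param[OF c2 cp ca])
  have fd2: "cmod (P2 - f1) = eE a c t2/(1+t2^2)" unfolding P2 f1_def eE_def by (rule focal_param[OF c2 cp ca])
  have fd3: "cmod (P3 - f1) = eE a c t3/(1+t3^2)" unfolding P3 f1_def eE_def by (rule focal_param[OF c2 cp ca])
  have e: "eE a c t1 > 0" "eE a c t2 > 0" "eE a c t3 > 0" using eE_pos[OF cp ca] by simp_all
  have fdp: "cmod (P1 - f1) > 0" "cmod (P2 - f1) > 0" "cmod (P3 - f1) > 0" unfolding fd1 fd2 fd3 using e T by simp_all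
  have nf: "P1 \<noteq> f1" "P2 \<noteq> f1" "P3 \<noteq> f1" using fdp by auto
  have Sp: "cmod (P2-P3)*cmod (P1-f1) + cmod (P1-P3)*cmod (P2-f1) + cmod (P1-P2)*cmod (P3-f1) > 0"
    by (intro add_pos_pos mult_pos_pos) (use sp fdp in auto)
  define Qs where "Qs = (of_real (cmod (P2-P3)/cmod (P1-f1)) * (P1-f1) + of_real (cmod (P1-P3)/cmod (P2-f1)) * (P2-f1)
         + of_real (cmod (P1-P2)/cmod (P3-f1)) * (P3-f1))
       / of_real (cmod (P2-P3)*cmod (P1-f1) + cmod (P1-P3)*cmod (P2-f1) + cmod (P1-P2)*cmod (P3-f1))"
  have inc: "incenter (inversion \<rho> f1 P1) (inversion \<rho> f1 P2) (inversion \<rho> f1 P3) = f1 + of_real (\<rho>^2) * Qs"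
    unfolding Qs_def by (rule incenter_inv[OF rho nf Sp])
  have k0: "k \<noteq> 0" using kp by simp
  have sa: "cmod (P2-P3) = gg a b P2 P3 / k" "cmod (P1-P3) = gg a b P1 P3 / k" "cmod (P1-P2) = gg a b P1 P2 / k"
  proof -
    have "k * cmod (P2-P3) = gg a b P2 P3" "k * cmod (P1-P3) = gg a b P1 P3" "k * cmod (P1-P2) = gg a b P1 P2"
      using ks12 ks13 ks23 g12 g13 g23 by simp_all
    thus "cmod (P2-P3) = gg a b P2 P3 / k" "cmod (P1-P3) = gg a b P1 P3 / k" "cmod (P1-P2) = gg a b P1 P2 / k"
      using k0 by (simp_all add: eq_divide_eq mult.commute)
  qed
  have rx: "Re (P1 - f1) = 2*a*t1/(1+t1^2) + c" "Re (P2 - f1) = 2*a*t2/(1+t2^2) + c" "Re (P3 - f1) = 2*a*t3/(1+t3^2) + c"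
    by (simp_all add: P1 P2 P3 f1_def)
  have ry: "Im (P1 - f1) = b*(1-t1^2)/(1+t1^2)" "Im (P2 - f1) = b*(1-t2^2)/(1+t2^2)" "Im (P3 - f1) = b*(1-t3^2)/(1+t3^2)"
    by (simp_all add: P1 P2 P3 f1_def)
  have ReQ: "Re Qs = NX3 a c t1 t2 t3/(DN3 a c t1 t2 t3*EE3 a c t1 t2 t3)"
  proof -
    have "Re Qs = (cmod (P2-P3)/cmod (P1-f1) * Re (P1-f1) + cmod (P1-P3)/cmod (P2-f1) * Re (P2-f1)
         + cmod (P1-P2)/cmod (P3-f1) * Re (P3-f1))
       / (cmod (P2-P3)*cmod (P1-f1) + cmod (P1-P3)*cmod (P2-f1) + cmod (P1-P2)*cmod (P3-f1))"
      unfolding Qs_def by simp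
    also have "\<dots> = (gg a b P2 P3/cmod (P1-f1) * Re (P1-f1) + gg a b P1 P3/cmod (P2-f1) * Re (P2-f1)
         + gg a b P1 P2/cmod (P3-f1) * Re (P3-f1))
       / (gg a b P2 P3*cmod (P1-f1) + gg a b P1 P3*cmod (P2-f1) + gg a b P1 P2*cmod (P3-f1))"
      unfolding sa by (rule scale_lem[OF k0])
    also have "\<dots> = NX3 a c t1 t2 t3/(DN3 a c t1 t2 t3*EE3 a c t1 t2 t3)"
      unfolding g12 g13 g23 fd1 fd2 fd3 rx by (rule Qparam(1)[OF cp ca d12 d13 d23])
    finally show ?thesis .
  qed
  have ImQ: "Im Qs = b * (NY3 a c t1 t2 t3/(DN3 a c t1 t2 t3*EE3 a c t1 t2 t3))"
  proof -
    have "Im Qs = (cmod (P2-P3)/cmod (P1-f1) * Im (P1-f1) + cmod (P1-P3)/cmod (P2-f1) * Im (P2-f1)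
         + cmod (P1-P2)/cmod (P3-f1) * Im (P3-f1))
       / (cmod (P2-P3)*cmod (P1-f1) + cmod (P1-P3)*cmod (P2-f1) + cmod (P1-P2)*cmod (P3-f1))"
      unfolding Qs_def by simp
    also have "\<dots> = (gg a b P2 P3/cmod (P1-f1) * Im (P1-f1) + gg a b P1 P3/cmod (P2-f1) * Im (P2-f1)
         + gg a b P1 P2/cmod (P3-f1) * Im (P3-f1))
       / (gg a b P2 P3*cmod (P1-f1) + gg a b P1 P3*cmod (P2-f1) + gg a b P1 P2*cmod (P3-f1))"
      unfolding sa by (rule scale_lem[OF k0])
    also have "\<dots> = b * (NY3 a c t1 t2 t3/(DN3 a c t1 t2 t3*EE3 a c t1 t2 t3))"
      unfolding g12 g13 g23 fd1 fd2 fd3 ry by (rule Qparam(2)[OF cp ca d12 d13 d23])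
    finally show ?thesis .
  qed
  define Kp where "Kp = (- 2 * a^2 + b^2 + 2 * \<delta>) / (2 * b^4)"
  define r where "r = (- 2 * \<delta>^2 + b^4 + (2*a^2 - b^2) * \<delta>) / (2*a*b^4)"
  have b4: "b^4 = (a^2-c^2)^2" unfolding bb by algebra
  have Kp': "c*Kp = c*(c^4*k^2 - a^2 + 2*(a^2-c^2))/(2*(a^2-c^2)^2)"
  proof -
    have "- 2 * a^2 + b^2 + 2 * \<delta> = c^4*k^2 - a^2 + 2*(a^2-c^2)" using hd bb by algebra
    thus ?thesis unfolding Kp_def b4 by simp
  qed
  have r': "r = (-4*a^4+4*a^2*(a^2-c^2)-2*(a^2-c^2)^2+(2*a^2-(a^2-c^2))*(c^4*k^2+a^2+(a^2-c^2)))/(4*a*(a^2-c^2)^2)"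
  proof -
    have eqY: "-4*a^4+4*a^2*(a^2-c^2)-2*(a^2-c^2)^2+(2*a^2-(a^2-c^2))*(c^4*k^2+a^2+(a^2-c^2))
        = 2*(- 2 * \<delta>^2 + b^4 + (2*a^2 - b^2) * \<delta>)"
      unfolding bb d2 hd[symmetric] by algebra
    have "b \<noteq> 0" using b .
    thus ?thesis unfolding eqY unfolding b4[symmetric] r_def using a by (simp add: field_simps)
  qed
  have rnn: "r \<ge> 0"
  proof -
    have A: "(2*a^2-b^2)^2*\<delta>^2 - (2*a^4-2*a^2*b^2+b^4)^2 = a^2*b^4*(a^2-b^2)" unfolding d2 by algebra
    have B: "a^2*b^4*(a^2-b^2) \<ge> 0" using ab by simp
    have "(2*a^4-2*a^2*b^2+b^4)^2 \<le> ((2*a^2-b^2)*\<delta>)^2" using A B unfolding power_mult_distrib by argo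
    moreover have "(2*a^2-b^2)*\<delta> \<ge> 0"
    proof -
      have "a^2 \<ge> 0" by simp
      hence "2*a^2-b^2 \<ge> 0" using ab by linarith
      thus ?thesis using dnn by simp
    qed
    ultimately have C: "2*a^4-2*a^2*b^2+b^4 \<le> (2*a^2-b^2)*\<delta>" by (rule power2_le_imp_le)
    have e: "- 2 * (a^4 - a^2*b^2 + b^4) + b^4 + (2*a^2 - b^2) * \<delta> = (2*a^2-b^2)*\<delta> - (2*a^4-2*a^2*b^2+b^4)" by algebra
    have "- 2 * \<delta>^2 + b^4 + (2*a^2 - b^2) * \<delta> \<ge> 0" unfolding d2 e using C by simp
    moreover have "2*a*b^4 > 0" using a b by simp
    ultimately show ?thesis unfolding r_def by simp
  qed
  have im2: "(Im Qs)^2 = (a^2-c^2)*(NY3 a c t1 t2 t3/(DN3 a c t1 t2 t3*EE3 a c t1 t2 t3))^2"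
    unfolding ImQ bb by (simp only: power_mult_distrib)
  have circ: "(Re Qs - c*Kp)^2 + (Im Qs)^2 = r^2"
    unfolding ReQ im2 Kp' r' by (rule cr(2))
  have arg: "f1 + of_real (\<rho>^2) * Qs - Complex (c * (- 1 + \<rho>^2 * Kp)) 0 = of_real (\<rho>^2) * (Qs - of_real (c*Kp))"
    unfolding f1_def by (simp add: complex_eq_iff algebra_simps)
  have "dist (incenter (inversion \<rho> f1 P1) (inversion \<rho> f1 P2) (inversion \<rho> f1 P3)) (Complex (c * (- 1 + \<rho>^2 * Kp)) 0)
      = cmod (of_real (\<rho>^2) * (Qs - of_real (c*Kp)))"
    unfolding inc dist_norm arg ..
  also have "\<dots> = \<rho>^2 * sqrt ((Re Qs - c*Kp)^2 + (Im Qs)^2)"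
    unfolding norm_mult norm_of_real by (simp add: cmod_def)
  also have "\<dots> = \<rho>^2 * r" unfolding circ using rnn by simp
  finally have calc: "dist (incenter (inversion \<rho> f1 P1) (inversion \<rho> f1 P2) (inversion \<rho> f1 P3)) (Complex (c * (- 1 + \<rho>^2 * Kp)) 0) = \<rho>^2 * r" .
  have eq1: "\<rho>^2 * (- 2 * a^2 + b^2 + 2 * \<delta>) / (2 * b^4) = \<rho>^2 * Kp" unfolding Kp_def by simp
  have eq2: "\<rho>^2 * (- 2 * \<delta>^2 + b^4 + (2*a^2 - b^2) * \<delta>) / (2*a*b^4) = \<rho>^2 * r" unfolding r_def by simp
  show ?thesis unfolding c_def[symmetric] \<delta>_def[symmetric] f1_def[symmetric] eq1 eq2 by (rule calc)
qed


lemma nb_comm: "normal_bisects a b P Q R = normal_bisects a b P R Q"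
  unfolding normal_bisects_def by (simp add: add.commute)

lemma axis_lem:
  fixes a b \<beta> :: real and P Q R :: complex
  assumes b0: "\<beta> \<noteq> 0" "\<beta>^2 = b^2" and nb: "normal_bisects a b P Q R"
    and P: "P = Complex 0 \<beta>" and Q: "Q = Complex 0 (-\<beta>)" and ER: "on_ellipse a b R" and RP: "R \<noteq> P"
  shows "R = Q"
proof -
  have bnz: "b \<noteq> 0" using b0 by auto
  have QP: "Q - P = Complex 0 (-2*\<beta>)" unfolding P Q by (simp add: complex_eq_iff)
  have "cross2 (ell_normal a b P) ((Q - P) / of_real (cmod (Q - P)) + (R - P) / of_real (cmod (R - P))) = 0"
    using nb unfolding normal_bisects_def .
  hence "(\<beta>/b^2) * (Re (R - P) / cmod (R - P)) = 0"
    unfolding cross2_def ell_normal_def QP by (simp add: P)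
  hence "Re (R - P) / cmod (R - P) = 0" using b0 bnz by simp
  moreover have "cmod (R - P) > 0" using RP by simp
  ultimately have "Re (R - P) = 0" by simp
  hence R0: "Re R = 0" unfolding P by simp
  have h: "(Re R)^2/a^2 + (Im R)^2/b^2 = 1" using ER unfolding on_ellipse_def .
  have "(Im R)^2 = b^2" using h R0 bnz by (simp add: field_simps)
  hence "(Im R)^2 = \<beta>^2" using b0 by simp
  hence "Im R = \<beta> \<or> Im R = -\<beta>" by (simp add: power2_eq_iff)
  moreover have "Im R \<noteq> \<beta>" using RP R0 unfolding P by (auto simp: complex_eq_iff)
  ultimately have "Im R = -\<beta>" by simp
  thus ?thesis using R0 unfolding Q by (simp add: complex_eq_iff)
qed

lemma tp_neg: "three_periodic a (-b) P1 P2 P3 = three_periodic a b P1 P2 P3"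
  unfolding three_periodic_def on_ellipse_def normal_bisects_def ell_normal_def by simp

lemma not_both:
  fixes a b \<beta> :: real
  assumes tp: "three_periodic a b P1 P2 P3" and b0: "\<beta> \<noteq> 0" "\<beta>^2 = b^2"
    and i: "Complex 0 \<beta> \<in> {P1,P2,P3}" and j: "Complex 0 (-\<beta>) \<in> {P1,P2,P3}"
  shows False
proof -
  from tp have n12: "P1 \<noteq> P2" and n23: "P2 \<noteq> P3" and n13: "P1 \<noteq> P3"
    and E1: "on_ellipse a b P1" and E2: "on_ellipse a b P2" and E3: "on_ellipse a b P3"
    and nb1: "normal_bisects a b P1 P3 P2" and nb2: "normal_bisects a b P2 P1 P3" and nb3: "normal_bisects a b P3 P2 P1"
    unfolding three_periodic_def by auto
  have nb1': "normal_bisects a b P1 P2 P3" using nb1 nb_comm by metis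
  have nb2': "normal_bisects a b P2 P3 P1" using nb2 nb_comm by metis
  have nb3': "normal_bisects a b P3 P1 P2" using nb3 nb_comm by metis
  define A where "A = Complex 0 \<beta>"
  define B where "B = Complex 0 (-\<beta>)"
  have ne: "A \<noteq> B" using b0 unfolding A_def B_def by simp
  have key: "False" if "normal_bisects a b X Y Z" "X = A" "Y = B" "on_ellipse a b Z" "Z \<noteq> X" "Z \<noteq> Y" for X Y Z
    using axis_lem[OF b0 that(1)] that(2-6) unfolding A_def B_def by blast
  have i': "P1 = A \<or> P2 = A \<or> P3 = A" using i unfolding A_def by auto
  have j': "P1 = B \<or> P2 = B \<or> P3 = B" using j unfolding B_def by auto
  show False
    using i' j'
  proof (elim disjE)
    assume "P1 = A" "P1 = B" thus False using ne by simp
  next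
    assume "P1 = A" "P2 = B" thus False using key[OF nb1' _ _ E3] n13 n23 by metis
  next
    assume "P1 = A" "P3 = B" thus False using key[OF nb1 _ _ E2] n12 n23 by metis
  next
    assume "P2 = A" "P1 = B" thus False using key[OF nb2 _ _ E3] n23 n13 by metis
  next
    assume "P2 = A" "P2 = B" thus False using ne by simp
  next
    assume "P2 = A" "P3 = B" thus False using key[OF nb2' _ _ E1] n12 n13 by metis
  next
    assume "P3 = A" "P1 = B" thus False using key[OF nb3' _ _ E2] n23 n12 by metis
  next
    assume "P3 = A" "P2 = B" thus False using key[OF nb3 _ _ E1] n13 n12 by metis
  next
    assume "P3 = A" "P3 = B" thus False using ne by simp
  qed
qed

theorem mainTheorem10:
  fixes a b \<rho> :: real and P1 P2 P3 :: complex
  assumes "a > b" and "b > 0" and "\<rho> > 0"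
    and "three_periodic a b P1 P2 P3"
  shows "let c = sqrt (a\<^sup>2 - b\<^sup>2);
             \<delta> = sqrt (a ^ 4 - a\<^sup>2 * b\<^sup>2 + b ^ 4);
             f1 = Complex (- c) 0;
             C1 = Complex (c * (- 1 + \<rho>\<^sup>2 * (- 2 * a\<^sup>2 + b\<^sup>2 + 2 * \<delta>) / (2 * b ^ 4))) 0;
             R1 = \<rho>\<^sup>2 * (- 2 * \<delta>\<^sup>2 + b ^ 4 + (2 * a\<^sup>2 - b\<^sup>2) * \<delta>) / (2 * a * b ^ 4)
         in dist (incenter (inversion \<rho> f1 P1) (inversion \<rho> f1 P2) (inversion \<rho> f1 P3)) C1 = R1"
proof -
  have a: "a > 0" using assms by simp
  have b0: "b \<noteq> 0" using assms by simp
  have ab: "b^2 < a^2" using assms by (simp add: power_strict_mono)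
  show ?thesis
  proof (cases "Complex 0 (-b) \<in> {P1,P2,P3}")
    case False
    hence nv: "P1 \<noteq> Complex 0 (-b)" "P2 \<noteq> Complex 0 (-b)" "P3 \<noteq> Complex 0 (-b)" by auto
    show ?thesis unfolding Let_def using main_aux[OF a b0 ab assms(3) assms(4) nv] by simp
  next
    case True
    have "Complex 0 b \<notin> {P1,P2,P3}"
    proof
      assume "Complex 0 b \<in> {P1,P2,P3}"
      thus False using not_both[OF assms(4) b0 _ _ True] by simp
    qed
    hence nv: "P1 \<noteq> Complex 0 (-(-b))" "P2 \<noteq> Complex 0 (-(-b))" "P3 \<noteq> Complex 0 (-(-b))" by auto
    have b0': "-b \<noteq> 0" using b0 by simp
    have ab': "(-b)^2 < a^2" using ab by simp
    have tp': "three_periodic a (-b) P1 P2 P3" using assms(4) tp_neg by simp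
    show ?thesis unfolding Let_def using main_aux[OF a b0' ab' assms(3) tp' nv] by simp
  qed
qed


end
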